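(* (i) $H^\infty$ acts transitively on $\Sigma$; (ii) $H^\infty[3]$ acts transitively on $\Sigma[3]$; (iii) for each $\alpha\in\Sigma$, the set of elements of $\Sigma$ orthogonal to $\alpha$ equals $g(\Sigma[3])$ for some $g\in H^\infty$; (iv) for each $\alpha\in\Sigma$, the stabilizer of $\alpha$ in $H^\infty$ contains a subgroup conjugate (in $H^\infty$) to $H^\infty[3]$, where $H^\infty[3]$ is regarded as acting on $\mathbb{R}^4$ by fixing the first coordinate.
   Context: Let $\tau=(1+\sqrt5)/2$, $\tau'=(1-\sqrt5)/2$. Let $\Delta\subset\mathbb{R}^4$ be the set of 120 vectors consisting of: the 8 vectors obtained from $(\pm1,0,0,0)$ by permuting coordinates; the 16 vectors $\frac12(\pm1,\pm1,\pm1,\pm1)$; and the 96 vectors obtained from $\frac12(0,\pm1,\pm\tau',\pm\tau)$ (all sign choices) by even permutations of the coordinates; $\Delta'$ is its image under $\tau\leftrightarrow\tau'$ in each coordinate. For a unit vector $a$, $r_a(x)=x-2(x\cdot a)a$; $H^\infty$ is the group generated by $r_a$, $a\in\Delta\cup\Delta'$, and $\Sigma=H^\infty(\Delta\cup\Delta')$. Let $V=\{x\in\mathbb{R}^4:x_1=0\}$, $\Delta[3]=\Delta\cap V$, $\Delta[3]'=\Delta'\cap V$, $H^\infty[3]$ the group of orthogonal maps of $V$ generated by $r_a$, $a\in\Delta[3]\cup\Delta[3]'$, and $\Sigma[3]=H^\infty[3](\Delta[3]\cup\Delta[3]')$. *)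

theory Defs
  imports "HOL-Analysis.Analysis" "HOL-Combinatorics.Permutations"
begin

definition tau :: real where "tau = (1 + sqrt 5) / 2"
definition tau' :: real where "tau' = (1 - sqrt 5) / 2"

text \<open>The 120-element root set built from parameters t (playing tau) and t' (playing tau').
  Delta = Delta_gen tau tau'; Delta' (swap tau and tau' in each coordinate) = Delta_gen tau' tau.\<close>
definition Delta_gen :: "real \<Rightarrow> real \<Rightarrow> (real^4) set" where
  "Delta_gen t t' =
     {x. \<exists>i s. s \<in> {-1, 1} \<and> x = (\<chi> j. if j = i then s else 0)}
   \<union> {x. \<exists>s1 s2 s3 s4. {s1, s2, s3, s4} \<subseteq> {-1, 1} \<and>
          x = vector [s1 / 2, s2 / 2, s3 / 2, s4 / 2]}
   \<union> {x. \<exists>p s1 s2 s3. p permutes (UNIV :: 4 set) \<and> evenperm p \<and> {s1, s2, s3} \<subseteq> {-1, 1} \<and>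
          x = (\<chi> j. (vector [0, s1 / 2, s2 * t' / 2, s3 * t / 2] :: real^4) $ p j)}"

definition Delta :: "(real^4) set" where "Delta = Delta_gen tau tau'"
definition Delta' :: "(real^4) set" where "Delta' = Delta_gen tau' tau"

definition refl :: "real^4 \<Rightarrow> real^4 \<Rightarrow> real^4" where
  "refl a x = x - (2 * (x \<bullet> a)) *\<^sub>R a"

inductive_set refl_group :: "(real^4) set \<Rightarrow> (real^4 \<Rightarrow> real^4) set" for A where
  rg_id: "id \<in> refl_group A"
| rg_step: "a \<in> A \<Longrightarrow> g \<in> refl_group A \<Longrightarrow> refl a \<circ> g \<in> refl_group A"
| rg_step_inv: "a \<in> A \<Longrightarrow> g \<in> refl_group A \<Longrightarrow> inv (refl a) \<circ> g \<in> refl_group A"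

definition Hinf :: "(real^4 \<Rightarrow> real^4) set" where "Hinf = refl_group (Delta \<union> Delta')"

definition Sigma :: "(real^4) set" where "Sigma = {g a | g a. g \<in> Hinf \<and> a \<in> Delta \<union> Delta'}"

definition V :: "(real^4) set" where "V = {x. x $ 1 = 0}"

definition Delta3 :: "(real^4) set" where "Delta3 = Delta \<inter> V"
definition Delta3' :: "(real^4) set" where "Delta3' = Delta' \<inter> V"

text \<open>H^infty[3], realised on R^4 (each generator fixes the first coordinate, so this is the
  group on V extended by fixing the first coordinate).\<close>
definition Hinf3 :: "(real^4 \<Rightarrow> real^4) set" where "Hinf3 = refl_group (Delta3 \<union> Delta3')"

definition Sigma3 :: "(real^4) set" where "Sigma3 = {g a | g a. g \<in> Hinf3 \<and> a \<in> Delta3 \<union> Delta3'}"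

end

theory Submission
  imports Defs
begin

lemma sqrt5_sq: "sqrt 5 * sqrt 5 = (5::real)" by simp
lemma tau_sq: "tau * tau = tau + 1"
  unfolding tau_def by (simp add: field_simps)
lemma tau'_eq: "tau' = 1 - tau"
  unfolding tau_def tau'_def by (simp add: field_simps)
lemma tau'_sq: "tau' * tau' = tau' + 1"
  unfolding tau'_def by (simp add: field_simps)

lemma int_sq5: "(m::int)^2 = 5 * n^2 \<Longrightarrow> n = 0"
proof (induction "nat \<bar>n\<bar>" arbitrary: m n rule: less_induct)
  case less
  show ?case
  proof (rule ccontr)
    assume n0: "n \<noteq> 0"
    have m5: "5 dvd m"
    proof -
      have "m^2 mod 5 = 0" using less.prems by simp
      then have "(m mod 5)^2 mod 5 = 0" by (simp add: power_mod)
      moreover have "m mod 5 = 0 \<or> m mod 5 = 1 \<or> m mod 5 = 2 \<or> m mod 5 = 3 \<or> m mod 5 = 4"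
        by presburger
      ultimately have "m mod 5 = 0" by auto
      then show ?thesis by auto
    qed
    then obtain k where k: "m = 5 * k" by auto
    have "n^2 = 5 * k^2" using less.prems k by (simp add: power_mult_distrib)
    moreover have "nat \<bar>k\<bar> < nat \<bar>n\<bar>"
    proof -
      have "n^2 > 0" using n0 by simp
      then have "k^2 < n^2" using calculation by linarith
      then have "\<bar>k\<bar> < \<bar>n\<bar>" using abs_le_square_iff[of n k] by linarith
      then show ?thesis by simp
    qed
    ultimately have "k = 0" using less.hyps by blast
    then show False using \<open>n^2 = 5*k^2\<close> n0 by simp
  qed
qed

lemma tau_indep: assumes "of_int p + of_int q * tau = 0" shows "p = 0 \<and> q = 0"
proof -
  have "of_int (2*p + q) + of_int q * sqrt 5 = 0"
    using assms unfolding tau_def by (simp add: field_simps)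
  then have e: "of_int (2*p+q) = - of_int q * sqrt 5" by simp
  then have "(of_int (2*p+q))^2 = (of_int q)^2 * (sqrt 5)^2" by (simp add: power_mult_distrib)
  then have "(of_int ((2*p+q)^2) :: real) = of_int (5 * q^2)" by simp
  then have "(2*p+q)^2 = 5 * q^2" by linarith
  then have "q = 0" by (rule int_sq5)
  then show ?thesis using e by simp
qed

lemma tau_indep2: assumes "of_int p + of_int q * tau = of_int p' + of_int q' * tau" shows "p = p' \<and> q = q'"
  using tau_indep[of "p - p'" "q - q'"] assms by (simp add: algebra_simps)

lemma vector_4 [simp]:
 "(vector [x,y,z,w] ::('a::zero)^4)$1 = x"
 "(vector [x,y,z,w] ::('a::zero)^4)$2 = y"
 "(vector [x,y,z,w] ::('a::zero)^4)$3 = z"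
 "(vector [x,y,z,w] ::('a::zero)^4)$4 = w"
  unfolding vector_def by simp_all

lemma inner4: "(x::real^4) \<bullet> y = x$1*y$1 + x$2*y$2 + x$3*y$3 + x$4*y$4"
  by (simp add: inner_vec_def sum_4)

lemma vec4_eq: "((x::real^4) = y) \<longleftrightarrow> x$1 = y$1 \<and> x$2 = y$2 \<and> x$3 = y$3 \<and> x$4 = y$4"
  by (simp add: vec_eq_iff forall_4)

definition zt :: "int \<Rightarrow> int \<Rightarrow> real" where "zt a b = of_int a + of_int b * tau"

lemma zt_mult: "zt a b * zt c d = zt (a*c+b*d) (a*d+b*c+b*d)"
proof -
  have "zt a b * zt c d = a*c + (a*d+b*c)*tau + b*d*(tau*tau)"
    unfolding zt_def by (simp add: algebra_simps)
  also have "\<dots> = zt (a*c+b*d) (a*d+b*c+b*d)" unfolding zt_def tau_sq by (simp add: algebra_simps)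
  finally show ?thesis .
qed
lemma zt_add: "zt a b + zt c d = zt (a+c) (b+d)" unfolding zt_def by (simp add: algebra_simps)
lemma zt_diff: "zt a b - zt c d = zt (a-c) (b-d)" unfolding zt_def by (simp add: algebra_simps)
lemma zt_scale: "of_int c * zt a b = zt (c*a) (c*b)" unfolding zt_def by (simp add: algebra_simps)
lemma zt_eq: "zt a b = zt c d \<longleftrightarrow> a = c \<and> b = d"
  unfolding zt_def using tau_indep2 by auto

definition V3 :: "nat \<Rightarrow> int \<Rightarrow> int \<Rightarrow> int \<Rightarrow> int \<Rightarrow> int \<Rightarrow> int \<Rightarrow> real^4" where
  "V3 k a2 b2 a3 b3 a4 b4 = vector [0, zt a2 b2 / 2^k, zt a3 b3 / 2^k, zt a4 b4 / 2^k]"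

lemma V3_comp [simp]:
  "V3 k a2 b2 a3 b3 a4 b4 $ 1 = 0"
  "V3 k a2 b2 a3 b3 a4 b4 $ 2 = zt a2 b2 / 2^k"
  "V3 k a2 b2 a3 b3 a4 b4 $ 3 = zt a3 b3 / 2^k"
  "V3 k a2 b2 a3 b3 a4 b4 $ 4 = zt a4 b4 / 2^k"
  unfolding V3_def by simp_all

definition "nA a2 b2 a3 b3 a4 b4 = a2*a2+b2*b2+a3*a3+b3*b3+a4*a4+b4*b4"
definition "nB a2 b2 a3 b3 a4 b4 = 2*a2*b2+b2*b2+2*a3*b3+b3*b3+2*a4*b4+b4*b4"

lemma V3_norm: "V3 k a2 b2 a3 b3 a4 b4 \<bullet> V3 k a2 b2 a3 b3 a4 b4
   = zt (nA a2 b2 a3 b3 a4 b4) (nB a2 b2 a3 b3 a4 b4) / 4^k"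
proof -
  have "V3 k a2 b2 a3 b3 a4 b4 \<bullet> V3 k a2 b2 a3 b3 a4 b4
     = (zt a2 b2 * zt a2 b2 + zt a3 b3 * zt a3 b3 + zt a4 b4 * zt a4 b4) / (2^k*2^k)"
    by (simp add: inner4 field_simps)
  also have "(2::real)^k*2^k = 4^k" by (simp add: power_mult_distrib[symmetric])
  finally show ?thesis unfolding zt_mult zt_add nA_def nB_def by (simp add: algebra_simps)
qed

lemma V3_norm1: "V3 k a2 b2 a3 b3 a4 b4 \<bullet> V3 k a2 b2 a3 b3 a4 b4 = 1 \<longleftrightarrow>
   nA a2 b2 a3 b3 a4 b4 = 4^k \<and> nB a2 b2 a3 b3 a4 b4 = 0"
proof -
  have "(4::real)^k > 0" by simp
  then have "V3 k a2 b2 a3 b3 a4 b4 \<bullet> V3 k a2 b2 a3 b3 a4 b4 = 1 \<longleftrightarrow>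
     zt (nA a2 b2 a3 b3 a4 b4) (nB a2 b2 a3 b3 a4 b4) = 4^k"
    unfolding V3_norm by (auto simp: field_simps)
  also have "\<dots> \<longleftrightarrow> zt (nA a2 b2 a3 b3 a4 b4) (nB a2 b2 a3 b3 a4 b4) = zt (4^k) 0"
    by (simp add: zt_def)
  finally have "V3 k a2 b2 a3 b3 a4 b4 \<bullet> V3 k a2 b2 a3 b3 a4 b4 = 1 \<longleftrightarrow>
     zt (nA a2 b2 a3 b3 a4 b4) (nB a2 b2 a3 b3 a4 b4) = zt (4^k) 0" .
  then show ?thesis by (simp add: zt_eq)
qed

lemma V3_half: "V3 (Suc k) (2*a2) (2*b2) (2*a3) (2*b3) (2*a4) (2*b4) = V3 k a2 b2 a3 b3 a4 b4"
  by (simp add: vec4_eq zt_def field_simps)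

lemma V3_quarter: "V3 (Suc (Suc k)) (4*a2) (4*b2) (4*a3) (4*b3) (4*a4) (4*b4) = V3 k a2 b2 a3 b3 a4 b4"
  by (simp add: vec4_eq zt_def field_simps)

lemma refl_comp: "refl a x $ j = x$j - 2*(x \<bullet> a) * a$j"
  unfolding refl_def by simp

lemma refl_refl: "a \<bullet> a = 1 \<Longrightarrow> refl a (refl a x) = x"
  unfolding refl_def by (simp add: inner_diff_left inner_scaleR_left algebra_simps)

lemma refl_inner: "a \<bullet> a = 1 \<Longrightarrow> refl a x \<bullet> refl a y = x \<bullet> y"
  unfolding refl_def by (simp add: inner_diff_left inner_diff_right inner_commute algebra_simps)

lemma inv_refl: "a \<bullet> a = 1 \<Longrightarrow> inv (refl a) = refl a"
  by (rule inv_unique_comp) (simp_all add: fun_eq_iff refl_refl)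

lemma refl_V3: "refl (V3 1 c2 d2 c3 d3 c4 d4) (V3 k a2 b2 a3 b3 a4 b4) =
  (let S0 = a2*c2+b2*d2+a3*c3+b3*d3+a4*c4+b4*d4;
       S1 = a2*d2+b2*c2+b2*d2+a3*d3+b3*c3+b3*d3+a4*d4+b4*c4+b4*d4 in
   V3 (Suc k) (2*a2 - S0*c2 - S1*d2) (2*b2 - S0*d2 - S1*c2 - S1*d2)
              (2*a3 - S0*c3 - S1*d3) (2*b3 - S0*d3 - S1*c3 - S1*d3)
              (2*a4 - S0*c4 - S1*d4) (2*b4 - S0*d4 - S1*c4 - S1*d4))"
proof -
  define S0 where "S0 = a2*c2+b2*d2+a3*c3+b3*d3+a4*c4+b4*d4"
  define S1 where "S1 = a2*d2+b2*c2+b2*d2+a3*d3+b3*c3+b3*d3+a4*d4+b4*c4+b4*d4"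
  have ip: "V3 k a2 b2 a3 b3 a4 b4 \<bullet> V3 1 c2 d2 c3 d3 c4 d4 = zt S0 S1 / 2^(Suc k)"
  proof -
    have "V3 k a2 b2 a3 b3 a4 b4 \<bullet> V3 1 c2 d2 c3 d3 c4 d4 =
      (zt a2 b2 * zt c2 d2 + zt a3 b3 * zt c3 d3 + zt a4 b4 * zt c4 d4) / (2^k * 2)"
      by (simp add: inner4 field_simps)
    also have "\<dots> = zt S0 S1 / 2^(Suc k)" unfolding zt_mult zt_add S0_def S1_def
      by (simp add: algebra_simps)
    finally show ?thesis .
  qed
  have gen: "\<And>a b c d. zt a b / 2^k - 2 * (zt S0 S1 / 2^(Suc k)) * (zt c d / 2^1)
      = zt (2*a - S0*c - S1*d) (2*b - S0*d - S1*c - S1*d) / 2^(Suc k)"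
  proof -
    fix a b c d
    have "zt a b / 2^k - 2 * (zt S0 S1 / 2^(Suc k)) * (zt c d / 2^1)
        = (of_int 2 * zt a b - zt S0 S1 * zt c d) / 2^(Suc k)"
      by (simp add: field_simps)
    also have "\<dots> = zt (2*a - S0*c - S1*d) (2*b - S0*d - S1*c - S1*d) / 2^(Suc k)"
      unfolding zt_mult zt_scale zt_diff by (simp add: algebra_simps)
    finally show "zt a b / 2^k - 2 * (zt S0 S1 / 2^(Suc k)) * (zt c d / 2^1)
      = zt (2*a - S0*c - S1*d) (2*b - S0*d - S1*c - S1*d) / 2^(Suc k)" .
  qed
  show ?thesis unfolding Let_def S0_def[symmetric] S1_def[symmetric]
    by (simp only: vec4_eq refl_comp ip V3_comp gen) simp
qed

lemma rg_refl: "a \<in> A \<Longrightarrow> refl a \<in> refl_group A"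
  using rg_step[OF _ rg_id, of a A] by simp

lemma rg_comp: "g \<in> refl_group A \<Longrightarrow> h \<in> refl_group A \<Longrightarrow> g \<circ> h \<in> refl_group A"
  by (induction rule: refl_group.induct) (auto simp: o_assoc[symmetric] intro: refl_group.intros)

lemma rg_mono: "g \<in> refl_group A \<Longrightarrow> A \<subseteq> B \<Longrightarrow> g \<in> refl_group B"
  by (induction rule: refl_group.induct) (auto intro: refl_group.intros)

definition unitset :: "(real^4) set \<Rightarrow> bool" where "unitset A \<longleftrightarrow> (\<forall>a\<in>A. a \<bullet> a = 1)"

lemma rg_props: assumes "unitset A" "g \<in> refl_group A"
  shows "(\<forall>x y. g x \<bullet> g y = x \<bullet> y) \<and> (\<exists>h\<in>refl_group A. \<forall>x. h (g x) = x \<and> g (h x) = x)"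
  using assms(2)
proof (induction rule: refl_group.induct)
  case rg_id
  show ?case by (rule conjI, simp, rule bexI[of _ id]) (auto intro: refl_group.rg_id)
next
  case (rg_step a g)
  have aa: "a \<bullet> a = 1" using assms(1) rg_step(1) unfolding unitset_def by auto
  from rg_step(3) obtain h where h: "h \<in> refl_group A" "\<forall>x. h (g x) = x \<and> g (h x) = x" by blast
  have "h \<circ> refl a \<in> refl_group A" using rg_comp[OF h(1) rg_refl[OF rg_step(1)]] .
  moreover have "\<forall>x. (h \<circ> refl a) ((refl a \<circ> g) x) = x \<and> (refl a \<circ> g) ((h \<circ> refl a) x) = x"
    using h(2) by (simp add: refl_refl[OF aa] del: refl_refl)
  moreover have "\<forall>x y. (refl a \<circ> g) x \<bullet> (refl a \<circ> g) y = x \<bullet> y"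
    using rg_step(3) by (simp add: refl_inner[OF aa])
  ultimately show ?case  by blast
next
  case (rg_step_inv a g)
  have aa: "a \<bullet> a = 1" using assms(1) rg_step_inv(1) unfolding unitset_def by auto
  from rg_step_inv(3) obtain h where h: "h \<in> refl_group A" "\<forall>x. h (g x) = x \<and> g (h x) = x" by blast
  have "h \<circ> refl a \<in> refl_group A" using rg_comp[OF h(1) rg_refl[OF rg_step_inv(1)]] .
  moreover have "\<forall>x. (h \<circ> refl a) ((refl a \<circ> g) x) = x \<and> (refl a \<circ> g) ((h \<circ> refl a) x) = x"
    using h(2) by (simp add: refl_refl[OF aa] del: refl_refl)
  moreover have "\<forall>x y. (refl a \<circ> g) x \<bullet> (refl a \<circ> g) y = x \<bullet> y"
    using rg_step_inv(3) by (simp add: refl_inner[OF aa])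
  ultimately show ?case unfolding inv_refl[OF aa] by blast
qed

lemma inv_eq: "(\<forall>x. h (g x) = x \<and> g (h x) = x) \<Longrightarrow> inv g = h"
  by (rule inv_unique_comp) (auto simp: fun_eq_iff)

lemma rg_fix1: assumes "unitset A" "\<forall>a\<in>A. a$1 = 0" "g \<in> refl_group A" shows "g x $ 1 = x $ 1"
  using assms(3)
proof (induction arbitrary: x rule: refl_group.induct)
  case rg_id then show ?case by simp
next
  case (rg_step a g) then show ?case using assms(2) by (simp add: refl_comp)
next
  case (rg_step_inv a g)
  have aa: "a \<bullet> a = 1" using assms(1) rg_step_inv(1) unfolding unitset_def by auto
  show ?case using rg_step_inv assms(2) by (simp add: refl_comp inv_refl[OF aa])
qed

lemma Delta_gen_cases:
  assumes "x \<in> Delta_gen t t'"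
  obtains (a) i s where "s \<in> {-1,1::real}" "x = (\<chi> j. if j = i then s else 0)"
    | (b) s1 s2 s3 s4 where "{s1,s2,s3,s4} \<subseteq> {-1,1::real}" "x = vector [s1/2, s2/2, s3/2, s4/2]"
    | (c) p s1 s2 s3 where "p permutes (UNIV :: 4 set)" "evenperm p" "{s1,s2,s3} \<subseteq> {-1,1::real}"
        "x = (\<chi> j. (vector [0, s1 / 2, s2 * t' / 2, s3 * t / 2] :: real^4) $ p j)"
proof -
  have "x \<in> {x. \<exists>i s. s \<in> {-1, 1} \<and> x = (\<chi> j. if j = i then s else 0)}
   \<or> x \<in> {x. \<exists>s1 s2 s3 s4. {s1, s2, s3, s4} \<subseteq> {-1, 1} \<and>
          x = vector [s1 / 2, s2 / 2, s3 / 2, s4 / 2]}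
   \<or> x \<in> {x. \<exists>p s1 s2 s3. p permutes (UNIV :: 4 set) \<and> evenperm p \<and> {s1, s2, s3} \<subseteq> {-1, 1} \<and>
          x = (\<chi> j. (vector [0, s1 / 2, s2 * t' / 2, s3 * t / 2] :: real^4) $ p j)}"
    using assms unfolding Delta_gen_def by (simp only: Un_iff disj_assoc)
  then show ?thesis
  proof (elim disjE)
    assume "x \<in> {x. \<exists>i s. s \<in> {-1, 1} \<and> x = (\<chi> j. if j = i then s else 0)}"
    then obtain i s where "s \<in> {-1, 1::real}" "x = (\<chi> j. if j = i then s else 0)" by (simp only: mem_Collect_eq) blast
    then show ?thesis by (rule a)
  next
    assume "x \<in> {x. \<exists>s1 s2 s3 s4. {s1, s2, s3, s4} \<subseteq> {-1, 1} \<and>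
          x = vector [s1 / 2, s2 / 2, s3 / 2, s4 / 2]}"
    then obtain s1 s2 s3 s4 where "{s1, s2, s3, s4} \<subseteq> {-1, 1::real}" "x = vector [s1 / 2, s2 / 2, s3 / 2, s4 / 2]"
      by (simp only: mem_Collect_eq) blast
    then show ?thesis by (rule b)
  next
    assume "x \<in> {x. \<exists>p s1 s2 s3. p permutes (UNIV :: 4 set) \<and> evenperm p \<and> {s1, s2, s3} \<subseteq> {-1, 1} \<and>
          x = (\<chi> j. (vector [0, s1 / 2, s2 * t' / 2, s3 * t / 2] :: real^4) $ p j)}"
    then obtain p s1 s2 s3 where "p permutes (UNIV :: 4 set)" "evenperm p" "{s1, s2, s3} \<subseteq> {-1, 1::real}"
         "x = (\<chi> j. (vector [0, s1 / 2, s2 * t' / 2, s3 * t / 2] :: real^4) $ p j)"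
      by (simp only: mem_Collect_eq) blast
    then show ?thesis by (rule c)
  qed
qed

lemma tau_sum3: "tau*tau + tau'*tau' = 3" using tau_sq tau'_sq tau'_eq by (simp add: algebra_simps)
lemma tau_sum1: "tau + tau' = 1" using tau'_eq by simp

lemma sgn_sq: "(s::real) \<in> {-1,1} \<Longrightarrow> s * s = 1" by auto

lemma Delta_gen_unit: assumes t: "t*t + t'*t' = 3" and x: "x \<in> Delta_gen t t'" shows "x \<bullet> x = 1"
proof -

  from x show ?thesis
  proof (cases rule: Delta_gen_cases)
    case (a i s)
    have "x \<bullet> x = (\<Sum>j\<in>UNIV. if j = i then s * s else 0)"
      unfolding inner_vec_def a(2) by (intro sum.cong) auto
    also have "\<dots> = s * s" by simp
    finally show ?thesis using a(1) by auto
  next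
    case (b s1 s2 s3 s4)
    then show ?thesis by (auto simp: inner4)
  next
    case (c p s1 s2 s3)
    let ?v = "(vector [0, s1 / 2, s2 * t' / 2, s3 * t / 2] :: real^4)"
    have "x \<bullet> x = (\<Sum>j\<in>UNIV. ((\<lambda>i. ?v$i * ?v$i) \<circ> p) j)"
      unfolding inner_vec_def c(4) by simp
    also have "\<dots> = (\<Sum>i\<in>UNIV. ?v$i * ?v$i)" using sum.permute[OF c(1), of "\<lambda>i. ?v$i * ?v$i"] by (simp add: comp_def)
    also have "\<dots> = (s1 * s1 + (s2 * s2)*(t'*t') + (s3 * s3)*(t*t))/4" by (simp add: sum_4 field_simps)
    also have "\<dots> = 1" using c(3) t by (simp add: sgn_sq)
    finally show ?thesis .
  qed
qed

lemma unit_roots: "unitset (Delta \<union> Delta')" "unitset (Delta3 \<union> Delta3')"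
  unfolding unitset_def Delta_def Delta'_def Delta3_def Delta3'_def
  using Delta_gen_unit[OF tau_sum3] Delta_gen_unit[of tau' tau] tau_sum3
  by (auto simp: algebra_simps)

definition isZ :: "real \<Rightarrow> bool" where "isZ r \<longleftrightarrow> (\<exists>a b. r = zt a b)"
lemma isZ_add: "isZ x \<Longrightarrow> isZ y \<Longrightarrow> isZ (x + y)" unfolding isZ_def by (metis zt_add)
lemma isZ_diff: "isZ x \<Longrightarrow> isZ y \<Longrightarrow> isZ (x - y)" unfolding isZ_def by (metis zt_diff)
lemma isZ_mult: "isZ x \<Longrightarrow> isZ y \<Longrightarrow> isZ (x * y)" unfolding isZ_def by (metis zt_mult)
lemma isZ_int: "isZ (of_int n)" unfolding isZ_def by (rule exI[of _ n], rule exI[of _ 0]) (simp add: zt_def)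
lemma isZ_0: "isZ 0" using isZ_int[of 0] by simp
lemma isZ_tau: "isZ tau" "isZ tau'" "isZ (-tau)" "isZ (-tau')"
proof -
  show "isZ tau" unfolding isZ_def zt_def by (rule exI[of _ 0], rule exI[of _ 1]) simp
  show "isZ tau'" unfolding isZ_def zt_def tau'_eq by (rule exI[of _ 1], rule exI[of _ "-1"]) simp
  show "isZ (-tau)" unfolding isZ_def zt_def by (rule exI[of _ 0], rule exI[of _ "-1"]) simp
  show "isZ (-tau')" unfolding isZ_def zt_def tau'_eq by (rule exI[of _ "-1"], rule exI[of _ 1]) simp
qed

definition lat :: "nat \<Rightarrow> real^4 \<Rightarrow> bool" where "lat k x \<longleftrightarrow> (\<forall>j. isZ (2^k * x$j))"

lemma lat_refl: assumes "lat k x" "lat 1 a" shows "lat (Suc k) (refl a x)"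
proof -
  have e: "2^(Suc k) * refl a x $ j = 2*(2^k*x$j) -
     ((2^k*x$1)*(2*a$1) + (2^k*x$2)*(2*a$2) + (2^k*x$3)*(2*a$3) + (2^k*x$4)*(2*a$4)) * (2*a$j)" for j
    by (simp add: refl_comp inner4 algebra_simps)
  have "isZ (2 * (2^k*x$j))" for j using assms(1) unfolding lat_def
    using isZ_mult[OF isZ_int[of 2]] by simp
  then show ?thesis unfolding lat_def e using assms unfolding lat_def
    by (simp add: isZ_add isZ_diff isZ_mult)
qed

lemma Delta_gen_lat: assumes t: "(t = tau \<and> t' = tau') \<or> (t = tau' \<and> t' = tau)" and x: "x \<in> Delta_gen t t'"
  shows "lat 1 x"
proof -
  have sgn: "isZ s" if "s \<in> {-1,1::real}" for s using that isZ_int[of 1] isZ_int[of "-1"] by auto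
  have sgnt: "isZ (s*t)" "isZ (s*t')" if "s \<in> {-1,1::real}" for s using that t isZ_tau by auto

  from x show ?thesis
  proof (cases rule: Delta_gen_cases)
    case (a i s)
    then show ?thesis unfolding lat_def using isZ_0 isZ_mult[OF isZ_int[of 2] sgn[OF a(1)]] by auto
  next
    case (b s1 s2 s3 s4)
    then show ?thesis unfolding lat_def forall_4 using sgn by auto
  next
    case (c p s1 s2 s3)
    let ?v = "(vector [0, s1 / 2, s2 * t' / 2, s3 * t / 2] :: real^4)"
    have "\<forall>i. isZ (2 * ?v$i)" unfolding forall_4 using c(3) sgn sgnt isZ_0 by (auto simp: mult.commute)
    then show ?thesis unfolding lat_def c(4) by simp
  qed
qed

lemma roots_lat: "a \<in> Delta \<union> Delta' \<Longrightarrow> lat 1 a"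
  unfolding Delta_def Delta'_def using Delta_gen_lat by auto

lemma in_third:
  assumes "{s1,s2,s3} \<subseteq> {-1,1::real}" "x = (vector [0, s1 / 2, s2 * t' / 2, s3 * t / 2] :: real^4)"
  shows "x \<in> Delta_gen t t'"
proof -
  have eq: "x = (\<chi> j. (vector [0, s1 / 2, s2 * t' / 2, s3 * t / 2] :: real^4) $ id j)"
    using assms(2) by (simp add: vec_eq_iff)
  show ?thesis unfolding Delta_gen_def
    apply (rule UnI2, rule CollectI)
    apply (rule exI[of _ id], rule exI[of _ s1], rule exI[of _ s2], rule exI[of _ s3])
    using assms(1) eq permutes_id by simp
qed

lemma in_first:
  assumes "s \<in> {-1,1::real}" "x = (\<chi> j. if j = i then s else 0)"
  shows "x \<in> Delta_gen t t'"
  unfolding Delta_gen_def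
  apply (rule UnI1, rule UnI1, rule CollectI)
  apply (rule exI[of _ i], rule exI[of _ s])
  using assms by simp

lemma sgn_int: "(s::int) \<in> {-1,1} \<Longrightarrow> (of_int s :: real) \<in> {-1,1}" by auto

lemma gold_D: assumes "s1 \<in> {-1,1}" "s2 \<in> {-1,1}" "s3 \<in> {-1,1}"
  shows "V3 1 s1 0 s2 (-s2) 0 s3 \<in> Delta3"
proof -
  have "V3 1 s1 0 s2 (-s2) 0 s3 \<in> Delta"
    unfolding Delta_def
    by (rule in_third[of "of_int s1" "of_int s2" "of_int s3"])
       (use sgn_int[OF assms(1)] sgn_int[OF assms(2)] sgn_int[OF assms(3)] in simp,
        simp add: vec4_eq zt_def tau'_eq algebra_simps)
  then show ?thesis unfolding Delta3_def V_def by simp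
qed

lemma gold_Dp: assumes "s1 \<in> {-1,1}" "s2 \<in> {-1,1}" "s3 \<in> {-1,1}"
  shows "V3 1 s1 0 0 s2 s3 (-s3) \<in> Delta3'"
proof -
  have "V3 1 s1 0 0 s2 s3 (-s3) \<in> Delta'"
    unfolding Delta'_def
    by (rule in_third[of "of_int s1" "of_int s2" "of_int s3"])
       (use sgn_int[OF assms(1)] sgn_int[OF assms(2)] sgn_int[OF assms(3)] in simp,
        simp add: vec4_eq zt_def tau'_eq algebra_simps)
  then show ?thesis unfolding Delta3'_def V_def by simp
qed

lemma coord_D: "V3 1 2 0 0 0 0 0 \<in> Delta3" "V3 1 0 0 2 0 0 0 \<in> Delta3" "V3 1 0 0 0 0 2 0 \<in> Delta3"
proof -
  have "V3 1 2 0 0 0 0 0 \<in> Delta" unfolding Delta_def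
    by (rule in_first[of 1 _ 2]) (auto simp: vec4_eq zt_def)
  then show "V3 1 2 0 0 0 0 0 \<in> Delta3" unfolding Delta3_def V_def by simp
  have "V3 1 0 0 2 0 0 0 \<in> Delta" unfolding Delta_def
    by (rule in_first[of 1 _ 3]) (auto simp: vec4_eq zt_def)
  then show "V3 1 0 0 2 0 0 0 \<in> Delta3" unfolding Delta3_def V_def by simp
  have "V3 1 0 0 0 0 2 0 \<in> Delta" unfolding Delta_def
    by (rule in_first[of 1 _ 4]) (auto simp: vec4_eq zt_def)
  then show "V3 1 0 0 0 0 2 0 \<in> Delta3" unfolding Delta3_def V_def by simp
qed

definition S0f :: "int \<Rightarrow> int \<Rightarrow> int \<Rightarrow> int \<Rightarrow> int \<Rightarrow> int \<Rightarrow> int \<Rightarrow> int \<Rightarrow> int \<Rightarrow> int \<Rightarrow> int \<Rightarrow> int \<Rightarrow> int" where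
  "S0f a2 b2 a3 b3 a4 b4 c2 d2 c3 d3 c4 d4 = a2*c2+b2*d2+a3*c3+b3*d3+a4*c4+b4*d4"
definition S1f :: "int \<Rightarrow> int \<Rightarrow> int \<Rightarrow> int \<Rightarrow> int \<Rightarrow> int \<Rightarrow> int \<Rightarrow> int \<Rightarrow> int \<Rightarrow> int \<Rightarrow> int \<Rightarrow> int \<Rightarrow> int" where
  "S1f a2 b2 a3 b3 a4 b4 c2 d2 c3 d3 c4 d4 = a2*d2+b2*c2+b2*d2+a3*d3+b3*c3+b3*d3+a4*d4+b4*c4+b4*d4"

definition okd :: "int \<Rightarrow> int \<Rightarrow> int \<Rightarrow> int \<Rightarrow> int \<Rightarrow> int \<Rightarrow> int \<Rightarrow> int \<Rightarrow> int \<Rightarrow> int \<Rightarrow> int \<Rightarrow> int \<Rightarrow> bool" where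
  "okd a2 b2 a3 b3 a4 b4 c2 d2 c3 d3 c4 d4 =
   (let S0 = S0f a2 b2 a3 b3 a4 b4 c2 d2 c3 d3 c4 d4; S1 = S1f a2 b2 a3 b3 a4 b4 c2 d2 c3 d3 c4 d4 in
   4 dvd (2*a2 - S0*c2 - S1*d2) \<and> 4 dvd (2*b2 - S0*d2 - S1*c2 - S1*d2) \<and>
   4 dvd (2*a3 - S0*c3 - S1*d3) \<and> 4 dvd (2*b3 - S0*d3 - S1*c3 - S1*d3) \<and>
   4 dvd (2*a4 - S0*c4 - S1*d4) \<and> 4 dvd (2*b4 - S0*d4 - S1*c4 - S1*d4))"

lemma Gco: "even (a - (l0*c + l1*d)) \<Longrightarrow> 4 dvd (S0 - 2*l0) \<Longrightarrow> 4 dvd (S1 - 2*l1) \<Longrightarrow>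
   4 dvd (2*a - S0*c - S1*d)" for a c d l0 l1 S0 S1 :: int
proof -
  assume "even (a - (l0*c + l1*d))" "4 dvd (S0 - 2*l0)" "4 dvd (S1 - 2*l1)"
  then obtain w n0 n1 where "a - (l0*c + l1*d) = 2*w" "S0 - 2*l0 = 4*n0" "S1 - 2*l1 = 4*n1"
    by (metis dvd_def evenE)
  then have "2*a - S0*c - S1*d = 4*(w - n0*c - n1*d)" by (simp add: algebra_simps)
  then show ?thesis by simp
qed

lemma Gco2: "even (b - (l0*d + l1*c + l1*d)) \<Longrightarrow> 4 dvd (S0 - 2*l0) \<Longrightarrow> 4 dvd (S1 - 2*l1) \<Longrightarrow>
   4 dvd (2*b - S0*d - S1*c - S1*d)" for b c d l0 l1 S0 S1 :: int
proof -
  assume "even (b - (l0*d + l1*c + l1*d))" "4 dvd (S0 - 2*l0)" "4 dvd (S1 - 2*l1)"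
  then obtain w n0 n1 where "b - (l0*d + l1*c + l1*d) = 2*w" "S0 - 2*l0 = 4*n0" "S1 - 2*l1 = 4*n1"
    by (metis dvd_def evenE)
  then have "2*b - S0*d - S1*c - S1*d = 4*(w - n0*d - n1*(c+d))" by (simp add: algebra_simps)
  then show ?thesis by simp
qed

lemma G_okd:
  assumes "even (a2 - (l0*c2 + l1*d2))" "even (b2 - (l0*d2 + l1*c2 + l1*d2))"
    "even (a3 - (l0*c3 + l1*d3))" "even (b3 - (l0*d3 + l1*c3 + l1*d3))"
    "even (a4 - (l0*c4 + l1*d4))" "even (b4 - (l0*d4 + l1*c4 + l1*d4))"
    "4 dvd (S0f a2 b2 a3 b3 a4 b4 c2 d2 c3 d3 c4 d4 - 2*l0)"
    "4 dvd (S1f a2 b2 a3 b3 a4 b4 c2 d2 c3 d3 c4 d4 - 2*l1)"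
  shows "okd a2 b2 a3 b3 a4 b4 c2 d2 c3 d3 c4 d4"
  unfolding okd_def Let_def using assms Gco Gco2 by blast

lemma Hlem: "4 dvd (X - c) \<Longrightarrow> 2 dvd (Y - t) \<Longrightarrow> 4 dvd (c - 2*t - d) \<Longrightarrow> Z = X - 2*Y \<Longrightarrow> 4 dvd (Z - d)"
  for X Y Z c t d :: int
proof -
  assume a: "4 dvd (X - c)" "2 dvd (Y - t)" "4 dvd (c - 2*t - d)" "Z = X - 2*Y"
  from a(2)[unfolded dvd_def] obtain w where "Y - t = 2*w" by blast
  then have e: "Z - d = (X - c) - 4*w + (c - 2*t - d)" using a(4) by (simp add: algebra_simps)
  have "4 dvd ((X - c) - 4*w + (c - 2*t - d))" by (rule dvd_add[OF dvd_diff[OF a(1) dvd_triv_left] a(3)])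
  then show ?thesis by (simp only: e)
qed

lemma even4: "even (x::int) \<Longrightarrow> 4 dvd x \<or> 4 dvd (x - 2)"
  by presburger

lemma m4: "(4 * (K::int) + r) mod 4 = r mod 4" by simp

lemma cls: fixes a b :: int shows
  "(even a \<and> even b \<and> (a * a + b * b) mod 4 = 0 \<and> (2 * a * b + b * b) mod 4 = 0) \<or>
   (odd a \<and> even b \<and> (a * a + b * b) mod 4 = 1 \<and> (2 * a * b + b * b) mod 4 = 0) \<or>
   (even a \<and> odd b \<and> (a * a + b * b) mod 4 = 1 \<and> (2 * a * b + b * b) mod 4 = 1) \<or>
   (odd a \<and> odd b \<and> (a * a + b * b) mod 4 = 2 \<and> (2 * a * b + b * b) mod 4 = 3)"
proof (cases "even a"; cases "even b")
  assume ea: "even a" and eb: "even b"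
  obtain u where u: "a = 2 * u" using ea by (rule evenE)
  obtain v where v: "b = 2 * v" using eb by (rule evenE)
  define K1 where "K1 = u * u + v * v"
  define K2 where "K2 = 2 * u * v + v * v"
  have "a * a + b * b = 4 * K1 + 0" "2 * a * b + b * b = 4 * K2 + 0"
    unfolding K1_def K2_def using u v by (simp_all add: algebra_simps)
  then show ?thesis using ea eb by simp
next
  assume ea: "even a" and eb: "odd b"
  obtain u where u: "a = 2 * u" using ea by (rule evenE)
  obtain v where v: "b = 2 * v + 1" using eb by (rule oddE)
  define K1 where "K1 = u * u + v * v + v"
  define K2 where "K2 = 2 * u * v + u + v * v + v"
  have "a * a + b * b = 4 * K1 + 1" "2 * a * b + b * b = 4 * K2 + 1"
    unfolding K1_def K2_def using u v by (simp_all add: algebra_simps)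
  then show ?thesis using ea eb by simp
next
  assume ea: "odd a" and eb: "even b"
  obtain u where u: "a = 2 * u + 1" using ea by (rule oddE)
  obtain v where v: "b = 2 * v" using eb by (rule evenE)
  define K1 where "K1 = u * u + u + v * v"
  define K2 where "K2 = 2 * u * v + v + v * v"
  have "a * a + b * b = 4 * K1 + 1" "2 * a * b + b * b = 4 * K2 + 0"
    unfolding K1_def K2_def using u v by (simp_all add: algebra_simps)
  then show ?thesis using ea eb by simp
next
  assume ea: "odd a" and eb: "odd b"
  obtain u where u: "a = 2 * u + 1" using ea by (rule oddE)
  obtain v where v: "b = 2 * v + 1" using eb by (rule oddE)
  define K1 where "K1 = u * u + u + v * v + v"
  define K2 where "K2 = 2 * u * v + u + v + v * v + v"
  have "a * a + b * b = 4 * K1 + 2" "2 * a * b + b * b = 4 * K2 + 3"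
    unfolding K1_def K2_def using u v by (simp_all add: algebra_simps)
  then show ?thesis using ea eb by simp
qed

lemma mod3: "(x mod 4 + y mod 4 + z mod 4) mod 4 = (x + y + z) mod (4::int)"
  by presburger

lemma patterns:
  fixes a2 b2 a3 b3 a4 b4 :: int
  assumes "4 dvd nA a2 b2 a3 b3 a4 b4" "4 dvd nB a2 b2 a3 b3 a4 b4"
    "\<not> (even a2 \<and> even b2 \<and> even a3 \<and> even b3 \<and> even a4 \<and> even b4)"
  shows "(odd a2 \<and> even b2 \<and> odd a3 \<and> odd b3 \<and> even a4 \<and> odd b4) \<or> (even a2 \<and> odd b2 \<and> odd a3 \<and> even b3 \<and> odd a4 \<and> odd b4) \<or> (odd a2 \<and> odd b2 \<and> even a3 \<and> odd b3 \<and> odd a4 \<and> even b4) \<or> (odd a2 \<and> even b2 \<and> even a3 \<and> odd b3 \<and> odd a4 \<and> odd b4) \<or> (even a2 \<and> odd b2 \<and> odd a3 \<and> odd b3 \<and> odd a4 \<and> even b4) \<or> (odd a2 \<and> odd b2 \<and> odd a3 \<and> even b3 \<and> even a4 \<and> odd b4)"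
proof -
  define A2 where "A2 = (a2 * a2 + b2 * b2) mod 4"
  define A3 where "A3 = (a3 * a3 + b3 * b3) mod 4"
  define A4 where "A4 = (a4 * a4 + b4 * b4) mod 4"
  define B2 where "B2 = (2 * a2 * b2 + b2 * b2) mod 4"
  define B3 where "B3 = (2 * a3 * b3 + b3 * b3) mod 4"
  define B4 where "B4 = (2 * a4 * b4 + b4 * b4) mod 4"
  have hA: "(A2 + A3 + A4) mod 4 = 0"
    unfolding A2_def A3_def A4_def mod3 using assms(1) unfolding nA_def by (simp add: add.assoc dvd_eq_mod_eq_0[symmetric])
  have hB: "(B2 + B3 + B4) mod 4 = 0"
    unfolding B2_def B3_def B4_def mod3 using assms(2) unfolding nB_def by (simp add: add.assoc dvd_eq_mod_eq_0[symmetric])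
  from cls[of a2 b2, folded A2_def B2_def] show ?thesis
  proof (elim disjE)
    assume c2: "even a2 \<and> even b2 \<and> A2 = 0 \<and> B2 = 0"
    from cls[of a3 b3, folded A3_def B3_def] show ?thesis
    proof (elim disjE)
      assume c3: "even a3 \<and> even b3 \<and> A3 = 0 \<and> B3 = 0"
      from cls[of a4 b4, folded A4_def B4_def] show ?thesis
      proof (elim disjE)
        assume c4: "even a4 \<and> even b4 \<and> A4 = 0 \<and> B4 = 0"
        show ?thesis using c2 c3 c4 hA hB assms(3) by simp
      next
        assume c4: "odd a4 \<and> even b4 \<and> A4 = 1 \<and> B4 = 0"
        show ?thesis using c2 c3 c4 hA hB assms(3) by simp
      next
        assume c4: "even a4 \<and> odd b4 \<and> A4 = 1 \<and> B4 = 1"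
        show ?thesis using c2 c3 c4 hA hB assms(3) by simp
      next
        assume c4: "odd a4 \<and> odd b4 \<and> A4 = 2 \<and> B4 = 3"
        show ?thesis using c2 c3 c4 hA hB assms(3) by simp
      qed
    next
      assume c3: "odd a3 \<and> even b3 \<and> A3 = 1 \<and> B3 = 0"
      from cls[of a4 b4, folded A4_def B4_def] show ?thesis
      proof (elim disjE)
        assume c4: "even a4 \<and> even b4 \<and> A4 = 0 \<and> B4 = 0"
        show ?thesis using c2 c3 c4 hA hB assms(3) by simp
      next
        assume c4: "odd a4 \<and> even b4 \<and> A4 = 1 \<and> B4 = 0"
        show ?thesis using c2 c3 c4 hA hB assms(3) by simp
      next
        assume c4: "even a4 \<and> odd b4 \<and> A4 = 1 \<and> B4 = 1"
        show ?thesis using c2 c3 c4 hA hB assms(3) by simp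
      next
        assume c4: "odd a4 \<and> odd b4 \<and> A4 = 2 \<and> B4 = 3"
        show ?thesis using c2 c3 c4 hA hB assms(3) by simp
      qed
    next
      assume c3: "even a3 \<and> odd b3 \<and> A3 = 1 \<and> B3 = 1"
      from cls[of a4 b4, folded A4_def B4_def] show ?thesis
      proof (elim disjE)
        assume c4: "even a4 \<and> even b4 \<and> A4 = 0 \<and> B4 = 0"
        show ?thesis using c2 c3 c4 hA hB assms(3) by simp
      next
        assume c4: "odd a4 \<and> even b4 \<and> A4 = 1 \<and> B4 = 0"
        show ?thesis using c2 c3 c4 hA hB assms(3) by simp
      next
        assume c4: "even a4 \<and> odd b4 \<and> A4 = 1 \<and> B4 = 1"
        show ?thesis using c2 c3 c4 hA hB assms(3) by simp
      next
        assume c4: "odd a4 \<and> odd b4 \<and> A4 = 2 \<and> B4 = 3"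
        show ?thesis using c2 c3 c4 hA hB assms(3) by simp
      qed
    next
      assume c3: "odd a3 \<and> odd b3 \<and> A3 = 2 \<and> B3 = 3"
      from cls[of a4 b4, folded A4_def B4_def] show ?thesis
      proof (elim disjE)
        assume c4: "even a4 \<and> even b4 \<and> A4 = 0 \<and> B4 = 0"
        show ?thesis using c2 c3 c4 hA hB assms(3) by simp
      next
        assume c4: "odd a4 \<and> even b4 \<and> A4 = 1 \<and> B4 = 0"
        show ?thesis using c2 c3 c4 hA hB assms(3) by simp
      next
        assume c4: "even a4 \<and> odd b4 \<and> A4 = 1 \<and> B4 = 1"
        show ?thesis using c2 c3 c4 hA hB assms(3) by simp
      next
        assume c4: "odd a4 \<and> odd b4 \<and> A4 = 2 \<and> B4 = 3"
        show ?thesis using c2 c3 c4 hA hB assms(3) by simp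
      qed
    qed
  next
    assume c2: "odd a2 \<and> even b2 \<and> A2 = 1 \<and> B2 = 0"
    from cls[of a3 b3, folded A3_def B3_def] show ?thesis
    proof (elim disjE)
      assume c3: "even a3 \<and> even b3 \<and> A3 = 0 \<and> B3 = 0"
      from cls[of a4 b4, folded A4_def B4_def] show ?thesis
      proof (elim disjE)
        assume c4: "even a4 \<and> even b4 \<and> A4 = 0 \<and> B4 = 0"
        show ?thesis using c2 c3 c4 hA hB assms(3) by simp
      next
        assume c4: "odd a4 \<and> even b4 \<and> A4 = 1 \<and> B4 = 0"
        show ?thesis using c2 c3 c4 hA hB assms(3) by simp
      next
        assume c4: "even a4 \<and> odd b4 \<and> A4 = 1 \<and> B4 = 1"
        show ?thesis using c2 c3 c4 hA hB assms(3) by simp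
      next
        assume c4: "odd a4 \<and> odd b4 \<and> A4 = 2 \<and> B4 = 3"
        show ?thesis using c2 c3 c4 hA hB assms(3) by simp
      qed
    next
      assume c3: "odd a3 \<and> even b3 \<and> A3 = 1 \<and> B3 = 0"
      from cls[of a4 b4, folded A4_def B4_def] show ?thesis
      proof (elim disjE)
        assume c4: "even a4 \<and> even b4 \<and> A4 = 0 \<and> B4 = 0"
        show ?thesis using c2 c3 c4 hA hB assms(3) by simp
      next
        assume c4: "odd a4 \<and> even b4 \<and> A4 = 1 \<and> B4 = 0"
        show ?thesis using c2 c3 c4 hA hB assms(3) by simp
      next
        assume c4: "even a4 \<and> odd b4 \<and> A4 = 1 \<and> B4 = 1"
        show ?thesis using c2 c3 c4 hA hB assms(3) by simp
      next
        assume c4: "odd a4 \<and> odd b4 \<and> A4 = 2 \<and> B4 = 3"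
        show ?thesis using c2 c3 c4 hA hB assms(3) by simp
      qed
    next
      assume c3: "even a3 \<and> odd b3 \<and> A3 = 1 \<and> B3 = 1"
      from cls[of a4 b4, folded A4_def B4_def] show ?thesis
      proof (elim disjE)
        assume c4: "even a4 \<and> even b4 \<and> A4 = 0 \<and> B4 = 0"
        show ?thesis using c2 c3 c4 hA hB assms(3) by simp
      next
        assume c4: "odd a4 \<and> even b4 \<and> A4 = 1 \<and> B4 = 0"
        show ?thesis using c2 c3 c4 hA hB assms(3) by simp
      next
        assume c4: "even a4 \<and> odd b4 \<and> A4 = 1 \<and> B4 = 1"
        show ?thesis using c2 c3 c4 hA hB assms(3) by simp
      next
        assume c4: "odd a4 \<and> odd b4 \<and> A4 = 2 \<and> B4 = 3"
        show ?thesis using c2 c3 c4 hA hB assms(3) by simp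
      qed
    next
      assume c3: "odd a3 \<and> odd b3 \<and> A3 = 2 \<and> B3 = 3"
      from cls[of a4 b4, folded A4_def B4_def] show ?thesis
      proof (elim disjE)
        assume c4: "even a4 \<and> even b4 \<and> A4 = 0 \<and> B4 = 0"
        show ?thesis using c2 c3 c4 hA hB assms(3) by simp
      next
        assume c4: "odd a4 \<and> even b4 \<and> A4 = 1 \<and> B4 = 0"
        show ?thesis using c2 c3 c4 hA hB assms(3) by simp
      next
        assume c4: "even a4 \<and> odd b4 \<and> A4 = 1 \<and> B4 = 1"
        show ?thesis using c2 c3 c4 hA hB assms(3) by simp
      next
        assume c4: "odd a4 \<and> odd b4 \<and> A4 = 2 \<and> B4 = 3"
        show ?thesis using c2 c3 c4 hA hB assms(3) by simp
      qed
    qed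
  next
    assume c2: "even a2 \<and> odd b2 \<and> A2 = 1 \<and> B2 = 1"
    from cls[of a3 b3, folded A3_def B3_def] show ?thesis
    proof (elim disjE)
      assume c3: "even a3 \<and> even b3 \<and> A3 = 0 \<and> B3 = 0"
      from cls[of a4 b4, folded A4_def B4_def] show ?thesis
      proof (elim disjE)
        assume c4: "even a4 \<and> even b4 \<and> A4 = 0 \<and> B4 = 0"
        show ?thesis using c2 c3 c4 hA hB assms(3) by simp
      next
        assume c4: "odd a4 \<and> even b4 \<and> A4 = 1 \<and> B4 = 0"
        show ?thesis using c2 c3 c4 hA hB assms(3) by simp
      next
        assume c4: "even a4 \<and> odd b4 \<and> A4 = 1 \<and> B4 = 1"
        show ?thesis using c2 c3 c4 hA hB assms(3) by simp
      next
        assume c4: "odd a4 \<and> odd b4 \<and> A4 = 2 \<and> B4 = 3"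
        show ?thesis using c2 c3 c4 hA hB assms(3) by simp
      qed
    next
      assume c3: "odd a3 \<and> even b3 \<and> A3 = 1 \<and> B3 = 0"
      from cls[of a4 b4, folded A4_def B4_def] show ?thesis
      proof (elim disjE)
        assume c4: "even a4 \<and> even b4 \<and> A4 = 0 \<and> B4 = 0"
        show ?thesis using c2 c3 c4 hA hB assms(3) by simp
      next
        assume c4: "odd a4 \<and> even b4 \<and> A4 = 1 \<and> B4 = 0"
        show ?thesis using c2 c3 c4 hA hB assms(3) by simp
      next
        assume c4: "even a4 \<and> odd b4 \<and> A4 = 1 \<and> B4 = 1"
        show ?thesis using c2 c3 c4 hA hB assms(3) by simp
      next
        assume c4: "odd a4 \<and> odd b4 \<and> A4 = 2 \<and> B4 = 3"
        show ?thesis using c2 c3 c4 hA hB assms(3) by simp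
      qed
    next
      assume c3: "even a3 \<and> odd b3 \<and> A3 = 1 \<and> B3 = 1"
      from cls[of a4 b4, folded A4_def B4_def] show ?thesis
      proof (elim disjE)
        assume c4: "even a4 \<and> even b4 \<and> A4 = 0 \<and> B4 = 0"
        show ?thesis using c2 c3 c4 hA hB assms(3) by simp
      next
        assume c4: "odd a4 \<and> even b4 \<and> A4 = 1 \<and> B4 = 0"
        show ?thesis using c2 c3 c4 hA hB assms(3) by simp
      next
        assume c4: "even a4 \<and> odd b4 \<and> A4 = 1 \<and> B4 = 1"
        show ?thesis using c2 c3 c4 hA hB assms(3) by simp
      next
        assume c4: "odd a4 \<and> odd b4 \<and> A4 = 2 \<and> B4 = 3"
        show ?thesis using c2 c3 c4 hA hB assms(3) by simp
      qed
    next
      assume c3: "odd a3 \<and> odd b3 \<and> A3 = 2 \<and> B3 = 3"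
      from cls[of a4 b4, folded A4_def B4_def] show ?thesis
      proof (elim disjE)
        assume c4: "even a4 \<and> even b4 \<and> A4 = 0 \<and> B4 = 0"
        show ?thesis using c2 c3 c4 hA hB assms(3) by simp
      next
        assume c4: "odd a4 \<and> even b4 \<and> A4 = 1 \<and> B4 = 0"
        show ?thesis using c2 c3 c4 hA hB assms(3) by simp
      next
        assume c4: "even a4 \<and> odd b4 \<and> A4 = 1 \<and> B4 = 1"
        show ?thesis using c2 c3 c4 hA hB assms(3) by simp
      next
        assume c4: "odd a4 \<and> odd b4 \<and> A4 = 2 \<and> B4 = 3"
        show ?thesis using c2 c3 c4 hA hB assms(3) by simp
      qed
    qed
  next
    assume c2: "odd a2 \<and> odd b2 \<and> A2 = 2 \<and> B2 = 3"
    from cls[of a3 b3, folded A3_def B3_def] show ?thesis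
    proof (elim disjE)
      assume c3: "even a3 \<and> even b3 \<and> A3 = 0 \<and> B3 = 0"
      from cls[of a4 b4, folded A4_def B4_def] show ?thesis
      proof (elim disjE)
        assume c4: "even a4 \<and> even b4 \<and> A4 = 0 \<and> B4 = 0"
        show ?thesis using c2 c3 c4 hA hB assms(3) by simp
      next
        assume c4: "odd a4 \<and> even b4 \<and> A4 = 1 \<and> B4 = 0"
        show ?thesis using c2 c3 c4 hA hB assms(3) by simp
      next
        assume c4: "even a4 \<and> odd b4 \<and> A4 = 1 \<and> B4 = 1"
        show ?thesis using c2 c3 c4 hA hB assms(3) by simp
      next
        assume c4: "odd a4 \<and> odd b4 \<and> A4 = 2 \<and> B4 = 3"
        show ?thesis using c2 c3 c4 hA hB assms(3) by simp
      qed
    next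
      assume c3: "odd a3 \<and> even b3 \<and> A3 = 1 \<and> B3 = 0"
      from cls[of a4 b4, folded A4_def B4_def] show ?thesis
      proof (elim disjE)
        assume c4: "even a4 \<and> even b4 \<and> A4 = 0 \<and> B4 = 0"
        show ?thesis using c2 c3 c4 hA hB assms(3) by simp
      next
        assume c4: "odd a4 \<and> even b4 \<and> A4 = 1 \<and> B4 = 0"
        show ?thesis using c2 c3 c4 hA hB assms(3) by simp
      next
        assume c4: "even a4 \<and> odd b4 \<and> A4 = 1 \<and> B4 = 1"
        show ?thesis using c2 c3 c4 hA hB assms(3) by simp
      next
        assume c4: "odd a4 \<and> odd b4 \<and> A4 = 2 \<and> B4 = 3"
        show ?thesis using c2 c3 c4 hA hB assms(3) by simp
      qed
    next
      assume c3: "even a3 \<and> odd b3 \<and> A3 = 1 \<and> B3 = 1"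
      from cls[of a4 b4, folded A4_def B4_def] show ?thesis
      proof (elim disjE)
        assume c4: "even a4 \<and> even b4 \<and> A4 = 0 \<and> B4 = 0"
        show ?thesis using c2 c3 c4 hA hB assms(3) by simp
      next
        assume c4: "odd a4 \<and> even b4 \<and> A4 = 1 \<and> B4 = 0"
        show ?thesis using c2 c3 c4 hA hB assms(3) by simp
      next
        assume c4: "even a4 \<and> odd b4 \<and> A4 = 1 \<and> B4 = 1"
        show ?thesis using c2 c3 c4 hA hB assms(3) by simp
      next
        assume c4: "odd a4 \<and> odd b4 \<and> A4 = 2 \<and> B4 = 3"
        show ?thesis using c2 c3 c4 hA hB assms(3) by simp
      qed
    next
      assume c3: "odd a3 \<and> odd b3 \<and> A3 = 2 \<and> B3 = 3"
      from cls[of a4 b4, folded A4_def B4_def] show ?thesis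
      proof (elim disjE)
        assume c4: "even a4 \<and> even b4 \<and> A4 = 0 \<and> B4 = 0"
        show ?thesis using c2 c3 c4 hA hB assms(3) by simp
      next
        assume c4: "odd a4 \<and> even b4 \<and> A4 = 1 \<and> B4 = 0"
        show ?thesis using c2 c3 c4 hA hB assms(3) by simp
      next
        assume c4: "even a4 \<and> odd b4 \<and> A4 = 1 \<and> B4 = 1"
        show ?thesis using c2 c3 c4 hA hB assms(3) by simp
      next
        assume c4: "odd a4 \<and> odd b4 \<and> A4 = 2 \<and> B4 = 3"
        show ?thesis using c2 c3 c4 hA hB assms(3) by simp
      qed
    qed
  qed
qed

lemma pat0:
  fixes a2 b2 a3 b3 a4 b4 :: int
  assumes par: "odd a2 \<and> even b2 \<and> odd a3 \<and> odd b3 \<and> even a4 \<and> odd b4"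
  shows "\<exists>c2 d2 c3 d3 c4 d4. V3 1 c2 d2 c3 d3 c4 d4 \<in> Delta3 \<union> Delta3' \<and> okd a2 b2 a3 b3 a4 b4 c2 d2 c3 d3 c4 d4"
proof -
  have eX0: "S0f a2 b2 a3 b3 a4 b4 (1) (0) (1) (-1) (0) (1) = (a2 + a3 - b3 + b4)" by (simp add: S0f_def)
  have eX1: "S1f a2 b2 a3 b3 a4 b4 (1) (0) (1) (-1) (0) (1) = (b2 - a3 + a4 + b4)" by (simp add: S1f_def)
  have ev0: "even (a2 + a3 - b3 + b4)" using par by simp
  have ev1: "even (b2 - a3 + a4 + b4)" using par by simp
  from even4[OF ev0] even4[OF ev1] show ?thesis
  proof (elim disjE)
    assume h0: "4 dvd (a2 + a3 - b3 + b4)" and h1: "4 dvd (b2 - a3 + a4 + b4)"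
    have m: "V3 1 (-1) (0) (1) (-1) (0) (1) \<in> Delta3 \<union> Delta3'"
      using gold_D[of "-1" "1" "1"] by simp
    have q0: "4 dvd (S0f a2 b2 a3 b3 a4 b4 (-1) (0) (1) (-1) (0) (1) - 2 * (1))"
      by (rule Hlem[where X="(a2 + a3 - b3 + b4)" and c=0 and Y="(a2)" and t=1])
         (use h0 par in simp, use par in simp, simp, simp add: S0f_def algebra_simps)
    have q1: "4 dvd (S1f a2 b2 a3 b3 a4 b4 (-1) (0) (1) (-1) (0) (1) - 2 * (0))"
      by (rule Hlem[where X="(b2 - a3 + a4 + b4)" and c=0 and Y="(b2)" and t=0])
         (use h1 par in simp, use par in simp, simp, simp add: S1f_def algebra_simps)
    have "okd a2 b2 a3 b3 a4 b4 (-1) (0) (1) (-1) (0) (1)"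
      by (rule G_okd[OF _ _ _ _ _ _ q0 q1]) (use par in simp_all)
    then show ?thesis using m by blast
  next
    assume h0: "4 dvd (a2 + a3 - b3 + b4)" and h1: "4 dvd ((b2 - a3 + a4 + b4) - 2)"
    have m: "V3 1 (1) (0) (1) (-1) (0) (-1) \<in> Delta3 \<union> Delta3'"
      using gold_D[of "1" "1" "-1"] by simp
    have q0: "4 dvd (S0f a2 b2 a3 b3 a4 b4 (1) (0) (1) (-1) (0) (-1) - 2 * (1))"
      by (rule Hlem[where X="(a2 + a3 - b3 + b4)" and c=0 and Y="(b4)" and t=1])
         (use h0 par in simp, use par in simp, simp, simp add: S0f_def algebra_simps)
    have q1: "4 dvd (S1f a2 b2 a3 b3 a4 b4 (1) (0) (1) (-1) (0) (-1) - 2 * (0))"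
      by (rule Hlem[where X="(b2 - a3 + a4 + b4)" and c=2 and Y="(a4 + b4)" and t=1])
         (use h1 par in simp, use par in simp, simp, simp add: S1f_def algebra_simps)
    have "okd a2 b2 a3 b3 a4 b4 (1) (0) (1) (-1) (0) (-1)"
      by (rule G_okd[OF _ _ _ _ _ _ q0 q1]) (use par in simp_all)
    then show ?thesis using m by blast
  next
    assume h0: "4 dvd ((a2 + a3 - b3 + b4) - 2)" and h1: "4 dvd (b2 - a3 + a4 + b4)"
    have m: "V3 1 (1) (0) (1) (-1) (0) (1) \<in> Delta3 \<union> Delta3'"
      using gold_D[of "1" "1" "1"] by simp
    have q0: "4 dvd (S0f a2 b2 a3 b3 a4 b4 (1) (0) (1) (-1) (0) (1) - 2 * (1))"
      by (rule Hlem[where X="(a2 + a3 - b3 + b4)" and c=2 and Y="0" and t=0])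
         (use h0 par in simp, use par in simp, simp, simp add: S0f_def algebra_simps)
    have q1: "4 dvd (S1f a2 b2 a3 b3 a4 b4 (1) (0) (1) (-1) (0) (1) - 2 * (0))"
      by (rule Hlem[where X="(b2 - a3 + a4 + b4)" and c=0 and Y="0" and t=0])
         (use h1 par in simp, use par in simp, simp, simp add: S1f_def algebra_simps)
    have "okd a2 b2 a3 b3 a4 b4 (1) (0) (1) (-1) (0) (1)"
      by (rule G_okd[OF _ _ _ _ _ _ q0 q1]) (use par in simp_all)
    then show ?thesis using m by blast
  next
    assume h0: "4 dvd ((a2 + a3 - b3 + b4) - 2)" and h1: "4 dvd ((b2 - a3 + a4 + b4) - 2)"
    have m: "V3 1 (1) (0) (-1) (1) (0) (1) \<in> Delta3 \<union> Delta3'"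
      using gold_D[of "1" "-1" "1"] by simp
    have q0: "4 dvd (S0f a2 b2 a3 b3 a4 b4 (1) (0) (-1) (1) (0) (1) - 2 * (1))"
      by (rule Hlem[where X="(a2 + a3 - b3 + b4)" and c=2 and Y="(a3 - b3)" and t=0])
         (use h0 par in simp, use par in simp, simp, simp add: S0f_def algebra_simps)
    have q1: "4 dvd (S1f a2 b2 a3 b3 a4 b4 (1) (0) (-1) (1) (0) (1) - 2 * (0))"
      by (rule Hlem[where X="(b2 - a3 + a4 + b4)" and c=2 and Y="(- a3)" and t=1])
         (use h1 par in simp, use par in simp, simp, simp add: S1f_def algebra_simps)
    have "okd a2 b2 a3 b3 a4 b4 (1) (0) (-1) (1) (0) (1)"
      by (rule G_okd[OF _ _ _ _ _ _ q0 q1]) (use par in simp_all)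
    then show ?thesis using m by blast
  qed
qed

lemma pat1:
  fixes a2 b2 a3 b3 a4 b4 :: int
  assumes par: "even a2 \<and> odd b2 \<and> odd a3 \<and> even b3 \<and> odd a4 \<and> odd b4"
  shows "\<exists>c2 d2 c3 d3 c4 d4. V3 1 c2 d2 c3 d3 c4 d4 \<in> Delta3 \<union> Delta3' \<and> okd a2 b2 a3 b3 a4 b4 c2 d2 c3 d3 c4 d4"
proof -
  have eX0: "S0f a2 b2 a3 b3 a4 b4 (1) (0) (1) (-1) (0) (1) = (a2 + a3 - b3 + b4)" by (simp add: S0f_def)
  have eX1: "S1f a2 b2 a3 b3 a4 b4 (1) (0) (1) (-1) (0) (1) = (b2 - a3 + a4 + b4)" by (simp add: S1f_def)
  have ev0: "even (a2 + a3 - b3 + b4)" using par by simp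
  have ev1: "even (b2 - a3 + a4 + b4)" using par by simp
  from even4[OF ev0] even4[OF ev1] show ?thesis
  proof (elim disjE)
    assume h0: "4 dvd (a2 + a3 - b3 + b4)" and h1: "4 dvd (b2 - a3 + a4 + b4)"
    have m: "V3 1 (-1) (0) (1) (-1) (0) (1) \<in> Delta3 \<union> Delta3'"
      using gold_D[of "-1" "1" "1"] by simp
    have q0: "4 dvd (S0f a2 b2 a3 b3 a4 b4 (-1) (0) (1) (-1) (0) (1) - 2 * (0))"
      by (rule Hlem[where X="(a2 + a3 - b3 + b4)" and c=0 and Y="(a2)" and t=0])
         (use h0 par in simp, use par in simp, simp, simp add: S0f_def algebra_simps)
    have q1: "4 dvd (S1f a2 b2 a3 b3 a4 b4 (-1) (0) (1) (-1) (0) (1) - 2 * (1))"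
      by (rule Hlem[where X="(b2 - a3 + a4 + b4)" and c=0 and Y="(b2)" and t=1])
         (use h1 par in simp, use par in simp, simp, simp add: S1f_def algebra_simps)
    have "okd a2 b2 a3 b3 a4 b4 (-1) (0) (1) (-1) (0) (1)"
      by (rule G_okd[OF _ _ _ _ _ _ q0 q1]) (use par in simp_all)
    then show ?thesis using m by blast
  next
    assume h0: "4 dvd (a2 + a3 - b3 + b4)" and h1: "4 dvd ((b2 - a3 + a4 + b4) - 2)"
    have m: "V3 1 (1) (0) (1) (-1) (0) (1) \<in> Delta3 \<union> Delta3'"
      using gold_D[of "1" "1" "1"] by simp
    have q0: "4 dvd (S0f a2 b2 a3 b3 a4 b4 (1) (0) (1) (-1) (0) (1) - 2 * (0))"
      by (rule Hlem[where X="(a2 + a3 - b3 + b4)" and c=0 and Y="0" and t=0])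
         (use h0 par in simp, use par in simp, simp, simp add: S0f_def algebra_simps)
    have q1: "4 dvd (S1f a2 b2 a3 b3 a4 b4 (1) (0) (1) (-1) (0) (1) - 2 * (1))"
      by (rule Hlem[where X="(b2 - a3 + a4 + b4)" and c=2 and Y="0" and t=0])
         (use h1 par in simp, use par in simp, simp, simp add: S1f_def algebra_simps)
    have "okd a2 b2 a3 b3 a4 b4 (1) (0) (1) (-1) (0) (1)"
      by (rule G_okd[OF _ _ _ _ _ _ q0 q1]) (use par in simp_all)
    then show ?thesis using m by blast
  next
    assume h0: "4 dvd ((a2 + a3 - b3 + b4) - 2)" and h1: "4 dvd (b2 - a3 + a4 + b4)"
    have m: "V3 1 (1) (0) (-1) (1) (0) (1) \<in> Delta3 \<union> Delta3'"
      using gold_D[of "1" "-1" "1"] by simp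
    have q0: "4 dvd (S0f a2 b2 a3 b3 a4 b4 (1) (0) (-1) (1) (0) (1) - 2 * (0))"
      by (rule Hlem[where X="(a2 + a3 - b3 + b4)" and c=2 and Y="(a3 - b3)" and t=1])
         (use h0 par in simp, use par in simp, simp, simp add: S0f_def algebra_simps)
    have q1: "4 dvd (S1f a2 b2 a3 b3 a4 b4 (1) (0) (-1) (1) (0) (1) - 2 * (1))"
      by (rule Hlem[where X="(b2 - a3 + a4 + b4)" and c=0 and Y="(- a3)" and t=1])
         (use h1 par in simp, use par in simp, simp, simp add: S1f_def algebra_simps)
    have "okd a2 b2 a3 b3 a4 b4 (1) (0) (-1) (1) (0) (1)"
      by (rule G_okd[OF _ _ _ _ _ _ q0 q1]) (use par in simp_all)
    then show ?thesis using m by blast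
  next
    assume h0: "4 dvd ((a2 + a3 - b3 + b4) - 2)" and h1: "4 dvd ((b2 - a3 + a4 + b4) - 2)"
    have m: "V3 1 (1) (0) (1) (-1) (0) (-1) \<in> Delta3 \<union> Delta3'"
      using gold_D[of "1" "1" "-1"] by simp
    have q0: "4 dvd (S0f a2 b2 a3 b3 a4 b4 (1) (0) (1) (-1) (0) (-1) - 2 * (0))"
      by (rule Hlem[where X="(a2 + a3 - b3 + b4)" and c=2 and Y="(b4)" and t=1])
         (use h0 par in simp, use par in simp, simp, simp add: S0f_def algebra_simps)
    have q1: "4 dvd (S1f a2 b2 a3 b3 a4 b4 (1) (0) (1) (-1) (0) (-1) - 2 * (1))"
      by (rule Hlem[where X="(b2 - a3 + a4 + b4)" and c=2 and Y="(a4 + b4)" and t=0])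
         (use h1 par in simp, use par in simp, simp, simp add: S1f_def algebra_simps)
    have "okd a2 b2 a3 b3 a4 b4 (1) (0) (1) (-1) (0) (-1)"
      by (rule G_okd[OF _ _ _ _ _ _ q0 q1]) (use par in simp_all)
    then show ?thesis using m by blast
  qed
qed

lemma pat2:
  fixes a2 b2 a3 b3 a4 b4 :: int
  assumes par: "odd a2 \<and> odd b2 \<and> even a3 \<and> odd b3 \<and> odd a4 \<and> even b4"
  shows "\<exists>c2 d2 c3 d3 c4 d4. V3 1 c2 d2 c3 d3 c4 d4 \<in> Delta3 \<union> Delta3' \<and> okd a2 b2 a3 b3 a4 b4 c2 d2 c3 d3 c4 d4"
proof -
  have eX0: "S0f a2 b2 a3 b3 a4 b4 (1) (0) (1) (-1) (0) (1) = (a2 + a3 - b3 + b4)" by (simp add: S0f_def)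
  have eX1: "S1f a2 b2 a3 b3 a4 b4 (1) (0) (1) (-1) (0) (1) = (b2 - a3 + a4 + b4)" by (simp add: S1f_def)
  have ev0: "even (a2 + a3 - b3 + b4)" using par by simp
  have ev1: "even (b2 - a3 + a4 + b4)" using par by simp
  from even4[OF ev0] even4[OF ev1] show ?thesis
  proof (elim disjE)
    assume h0: "4 dvd (a2 + a3 - b3 + b4)" and h1: "4 dvd (b2 - a3 + a4 + b4)"
    have m: "V3 1 (-1) (0) (1) (-1) (0) (1) \<in> Delta3 \<union> Delta3'"
      using gold_D[of "-1" "1" "1"] by simp
    have q0: "4 dvd (S0f a2 b2 a3 b3 a4 b4 (-1) (0) (1) (-1) (0) (1) - 2 * (1))"
      by (rule Hlem[where X="(a2 + a3 - b3 + b4)" and c=0 and Y="(a2)" and t=1])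
         (use h0 par in simp, use par in simp, simp, simp add: S0f_def algebra_simps)
    have q1: "4 dvd (S1f a2 b2 a3 b3 a4 b4 (-1) (0) (1) (-1) (0) (1) - 2 * (1))"
      by (rule Hlem[where X="(b2 - a3 + a4 + b4)" and c=0 and Y="(b2)" and t=1])
         (use h1 par in simp, use par in simp, simp, simp add: S1f_def algebra_simps)
    have "okd a2 b2 a3 b3 a4 b4 (-1) (0) (1) (-1) (0) (1)"
      by (rule G_okd[OF _ _ _ _ _ _ q0 q1]) (use par in simp_all)
    then show ?thesis using m by blast
  next
    assume h0: "4 dvd (a2 + a3 - b3 + b4)" and h1: "4 dvd ((b2 - a3 + a4 + b4) - 2)"
    have m: "V3 1 (1) (0) (-1) (1) (0) (1) \<in> Delta3 \<union> Delta3'"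
      using gold_D[of "1" "-1" "1"] by simp
    have q0: "4 dvd (S0f a2 b2 a3 b3 a4 b4 (1) (0) (-1) (1) (0) (1) - 2 * (1))"
      by (rule Hlem[where X="(a2 + a3 - b3 + b4)" and c=0 and Y="(a3 - b3)" and t=1])
         (use h0 par in simp, use par in simp, simp, simp add: S0f_def algebra_simps)
    have q1: "4 dvd (S1f a2 b2 a3 b3 a4 b4 (1) (0) (-1) (1) (0) (1) - 2 * (1))"
      by (rule Hlem[where X="(b2 - a3 + a4 + b4)" and c=2 and Y="(- a3)" and t=0])
         (use h1 par in simp, use par in simp, simp, simp add: S1f_def algebra_simps)
    have "okd a2 b2 a3 b3 a4 b4 (1) (0) (-1) (1) (0) (1)"
      by (rule G_okd[OF _ _ _ _ _ _ q0 q1]) (use par in simp_all)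
    then show ?thesis using m by blast
  next
    assume h0: "4 dvd ((a2 + a3 - b3 + b4) - 2)" and h1: "4 dvd (b2 - a3 + a4 + b4)"
    have m: "V3 1 (1) (0) (1) (-1) (0) (-1) \<in> Delta3 \<union> Delta3'"
      using gold_D[of "1" "1" "-1"] by simp
    have q0: "4 dvd (S0f a2 b2 a3 b3 a4 b4 (1) (0) (1) (-1) (0) (-1) - 2 * (1))"
      by (rule Hlem[where X="(a2 + a3 - b3 + b4)" and c=2 and Y="(b4)" and t=0])
         (use h0 par in simp, use par in simp, simp, simp add: S0f_def algebra_simps)
    have q1: "4 dvd (S1f a2 b2 a3 b3 a4 b4 (1) (0) (1) (-1) (0) (-1) - 2 * (1))"
      by (rule Hlem[where X="(b2 - a3 + a4 + b4)" and c=0 and Y="(a4 + b4)" and t=1])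
         (use h1 par in simp, use par in simp, simp, simp add: S1f_def algebra_simps)
    have "okd a2 b2 a3 b3 a4 b4 (1) (0) (1) (-1) (0) (-1)"
      by (rule G_okd[OF _ _ _ _ _ _ q0 q1]) (use par in simp_all)
    then show ?thesis using m by blast
  next
    assume h0: "4 dvd ((a2 + a3 - b3 + b4) - 2)" and h1: "4 dvd ((b2 - a3 + a4 + b4) - 2)"
    have m: "V3 1 (1) (0) (1) (-1) (0) (1) \<in> Delta3 \<union> Delta3'"
      using gold_D[of "1" "1" "1"] by simp
    have q0: "4 dvd (S0f a2 b2 a3 b3 a4 b4 (1) (0) (1) (-1) (0) (1) - 2 * (1))"
      by (rule Hlem[where X="(a2 + a3 - b3 + b4)" and c=2 and Y="0" and t=0])
         (use h0 par in simp, use par in simp, simp, simp add: S0f_def algebra_simps)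
    have q1: "4 dvd (S1f a2 b2 a3 b3 a4 b4 (1) (0) (1) (-1) (0) (1) - 2 * (1))"
      by (rule Hlem[where X="(b2 - a3 + a4 + b4)" and c=2 and Y="0" and t=0])
         (use h1 par in simp, use par in simp, simp, simp add: S1f_def algebra_simps)
    have "okd a2 b2 a3 b3 a4 b4 (1) (0) (1) (-1) (0) (1)"
      by (rule G_okd[OF _ _ _ _ _ _ q0 q1]) (use par in simp_all)
    then show ?thesis using m by blast
  qed
qed

lemma pat3:
  fixes a2 b2 a3 b3 a4 b4 :: int
  assumes par: "odd a2 \<and> even b2 \<and> even a3 \<and> odd b3 \<and> odd a4 \<and> odd b4"
  shows "\<exists>c2 d2 c3 d3 c4 d4. V3 1 c2 d2 c3 d3 c4 d4 \<in> Delta3 \<union> Delta3' \<and> okd a2 b2 a3 b3 a4 b4 c2 d2 c3 d3 c4 d4"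
proof -
  have eX0: "S0f a2 b2 a3 b3 a4 b4 (1) (0) (0) (1) (1) (-1) = (a2 + b3 + a4 - b4)" by (simp add: S0f_def)
  have eX1: "S1f a2 b2 a3 b3 a4 b4 (1) (0) (0) (1) (1) (-1) = (b2 + a3 + b3 - a4)" by (simp add: S1f_def)
  have ev0: "even (a2 + b3 + a4 - b4)" using par by simp
  have ev1: "even (b2 + a3 + b3 - a4)" using par by simp
  from even4[OF ev0] even4[OF ev1] show ?thesis
  proof (elim disjE)
    assume h0: "4 dvd (a2 + b3 + a4 - b4)" and h1: "4 dvd (b2 + a3 + b3 - a4)"
    have m: "V3 1 (-1) (0) (0) (1) (1) (-1) \<in> Delta3 \<union> Delta3'"
      using gold_Dp[of "-1" "1" "1"] by simp
    have q0: "4 dvd (S0f a2 b2 a3 b3 a4 b4 (-1) (0) (0) (1) (1) (-1) - 2 * (1))"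
      by (rule Hlem[where X="(a2 + b3 + a4 - b4)" and c=0 and Y="(a2)" and t=1])
         (use h0 par in simp, use par in simp, simp, simp add: S0f_def algebra_simps)
    have q1: "4 dvd (S1f a2 b2 a3 b3 a4 b4 (-1) (0) (0) (1) (1) (-1) - 2 * (0))"
      by (rule Hlem[where X="(b2 + a3 + b3 - a4)" and c=0 and Y="(b2)" and t=0])
         (use h1 par in simp, use par in simp, simp, simp add: S1f_def algebra_simps)
    have "okd a2 b2 a3 b3 a4 b4 (-1) (0) (0) (1) (1) (-1)"
      by (rule G_okd[OF _ _ _ _ _ _ q0 q1]) (use par in simp_all)
    then show ?thesis using m by blast
  next
    assume h0: "4 dvd (a2 + b3 + a4 - b4)" and h1: "4 dvd ((b2 + a3 + b3 - a4) - 2)"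
    have m: "V3 1 (1) (0) (0) (-1) (1) (-1) \<in> Delta3 \<union> Delta3'"
      using gold_Dp[of "1" "-1" "1"] by simp
    have q0: "4 dvd (S0f a2 b2 a3 b3 a4 b4 (1) (0) (0) (-1) (1) (-1) - 2 * (1))"
      by (rule Hlem[where X="(a2 + b3 + a4 - b4)" and c=0 and Y="(b3)" and t=1])
         (use h0 par in simp, use par in simp, simp, simp add: S0f_def algebra_simps)
    have q1: "4 dvd (S1f a2 b2 a3 b3 a4 b4 (1) (0) (0) (-1) (1) (-1) - 2 * (0))"
      by (rule Hlem[where X="(b2 + a3 + b3 - a4)" and c=2 and Y="(a3 + b3)" and t=1])
         (use h1 par in simp, use par in simp, simp, simp add: S1f_def algebra_simps)
    have "okd a2 b2 a3 b3 a4 b4 (1) (0) (0) (-1) (1) (-1)"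
      by (rule G_okd[OF _ _ _ _ _ _ q0 q1]) (use par in simp_all)
    then show ?thesis using m by blast
  next
    assume h0: "4 dvd ((a2 + b3 + a4 - b4) - 2)" and h1: "4 dvd (b2 + a3 + b3 - a4)"
    have m: "V3 1 (1) (0) (0) (1) (1) (-1) \<in> Delta3 \<union> Delta3'"
      using gold_Dp[of "1" "1" "1"] by simp
    have q0: "4 dvd (S0f a2 b2 a3 b3 a4 b4 (1) (0) (0) (1) (1) (-1) - 2 * (1))"
      by (rule Hlem[where X="(a2 + b3 + a4 - b4)" and c=2 and Y="0" and t=0])
         (use h0 par in simp, use par in simp, simp, simp add: S0f_def algebra_simps)
    have q1: "4 dvd (S1f a2 b2 a3 b3 a4 b4 (1) (0) (0) (1) (1) (-1) - 2 * (0))"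
      by (rule Hlem[where X="(b2 + a3 + b3 - a4)" and c=0 and Y="0" and t=0])
         (use h1 par in simp, use par in simp, simp, simp add: S1f_def algebra_simps)
    have "okd a2 b2 a3 b3 a4 b4 (1) (0) (0) (1) (1) (-1)"
      by (rule G_okd[OF _ _ _ _ _ _ q0 q1]) (use par in simp_all)
    then show ?thesis using m by blast
  next
    assume h0: "4 dvd ((a2 + b3 + a4 - b4) - 2)" and h1: "4 dvd ((b2 + a3 + b3 - a4) - 2)"
    have m: "V3 1 (1) (0) (0) (1) (-1) (1) \<in> Delta3 \<union> Delta3'"
      using gold_Dp[of "1" "1" "-1"] by simp
    have q0: "4 dvd (S0f a2 b2 a3 b3 a4 b4 (1) (0) (0) (1) (-1) (1) - 2 * (1))"
      by (rule Hlem[where X="(a2 + b3 + a4 - b4)" and c=2 and Y="(a4 - b4)" and t=0])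
         (use h0 par in simp, use par in simp, simp, simp add: S0f_def algebra_simps)
    have q1: "4 dvd (S1f a2 b2 a3 b3 a4 b4 (1) (0) (0) (1) (-1) (1) - 2 * (0))"
      by (rule Hlem[where X="(b2 + a3 + b3 - a4)" and c=2 and Y="(- a4)" and t=1])
         (use h1 par in simp, use par in simp, simp, simp add: S1f_def algebra_simps)
    have "okd a2 b2 a3 b3 a4 b4 (1) (0) (0) (1) (-1) (1)"
      by (rule G_okd[OF _ _ _ _ _ _ q0 q1]) (use par in simp_all)
    then show ?thesis using m by blast
  qed
qed

lemma pat4:
  fixes a2 b2 a3 b3 a4 b4 :: int
  assumes par: "even a2 \<and> odd b2 \<and> odd a3 \<and> odd b3 \<and> odd a4 \<and> even b4"
  shows "\<exists>c2 d2 c3 d3 c4 d4. V3 1 c2 d2 c3 d3 c4 d4 \<in> Delta3 \<union> Delta3' \<and> okd a2 b2 a3 b3 a4 b4 c2 d2 c3 d3 c4 d4"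
proof -
  have eX0: "S0f a2 b2 a3 b3 a4 b4 (1) (0) (0) (1) (1) (-1) = (a2 + b3 + a4 - b4)" by (simp add: S0f_def)
  have eX1: "S1f a2 b2 a3 b3 a4 b4 (1) (0) (0) (1) (1) (-1) = (b2 + a3 + b3 - a4)" by (simp add: S1f_def)
  have ev0: "even (a2 + b3 + a4 - b4)" using par by simp
  have ev1: "even (b2 + a3 + b3 - a4)" using par by simp
  from even4[OF ev0] even4[OF ev1] show ?thesis
  proof (elim disjE)
    assume h0: "4 dvd (a2 + b3 + a4 - b4)" and h1: "4 dvd (b2 + a3 + b3 - a4)"
    have m: "V3 1 (-1) (0) (0) (1) (1) (-1) \<in> Delta3 \<union> Delta3'"
      using gold_Dp[of "-1" "1" "1"] by simp
    have q0: "4 dvd (S0f a2 b2 a3 b3 a4 b4 (-1) (0) (0) (1) (1) (-1) - 2 * (0))"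
      by (rule Hlem[where X="(a2 + b3 + a4 - b4)" and c=0 and Y="(a2)" and t=0])
         (use h0 par in simp, use par in simp, simp, simp add: S0f_def algebra_simps)
    have q1: "4 dvd (S1f a2 b2 a3 b3 a4 b4 (-1) (0) (0) (1) (1) (-1) - 2 * (1))"
      by (rule Hlem[where X="(b2 + a3 + b3 - a4)" and c=0 and Y="(b2)" and t=1])
         (use h1 par in simp, use par in simp, simp, simp add: S1f_def algebra_simps)
    have "okd a2 b2 a3 b3 a4 b4 (-1) (0) (0) (1) (1) (-1)"
      by (rule G_okd[OF _ _ _ _ _ _ q0 q1]) (use par in simp_all)
    then show ?thesis using m by blast
  next
    assume h0: "4 dvd (a2 + b3 + a4 - b4)" and h1: "4 dvd ((b2 + a3 + b3 - a4) - 2)"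
    have m: "V3 1 (1) (0) (0) (1) (1) (-1) \<in> Delta3 \<union> Delta3'"
      using gold_Dp[of "1" "1" "1"] by simp
    have q0: "4 dvd (S0f a2 b2 a3 b3 a4 b4 (1) (0) (0) (1) (1) (-1) - 2 * (0))"
      by (rule Hlem[where X="(a2 + b3 + a4 - b4)" and c=0 and Y="0" and t=0])
         (use h0 par in simp, use par in simp, simp, simp add: S0f_def algebra_simps)
    have q1: "4 dvd (S1f a2 b2 a3 b3 a4 b4 (1) (0) (0) (1) (1) (-1) - 2 * (1))"
      by (rule Hlem[where X="(b2 + a3 + b3 - a4)" and c=2 and Y="0" and t=0])
         (use h1 par in simp, use par in simp, simp, simp add: S1f_def algebra_simps)
    have "okd a2 b2 a3 b3 a4 b4 (1) (0) (0) (1) (1) (-1)"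
      by (rule G_okd[OF _ _ _ _ _ _ q0 q1]) (use par in simp_all)
    then show ?thesis using m by blast
  next
    assume h0: "4 dvd ((a2 + b3 + a4 - b4) - 2)" and h1: "4 dvd (b2 + a3 + b3 - a4)"
    have m: "V3 1 (1) (0) (0) (1) (-1) (1) \<in> Delta3 \<union> Delta3'"
      using gold_Dp[of "1" "1" "-1"] by simp
    have q0: "4 dvd (S0f a2 b2 a3 b3 a4 b4 (1) (0) (0) (1) (-1) (1) - 2 * (0))"
      by (rule Hlem[where X="(a2 + b3 + a4 - b4)" and c=2 and Y="(a4 - b4)" and t=1])
         (use h0 par in simp, use par in simp, simp, simp add: S0f_def algebra_simps)
    have q1: "4 dvd (S1f a2 b2 a3 b3 a4 b4 (1) (0) (0) (1) (-1) (1) - 2 * (1))"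
      by (rule Hlem[where X="(b2 + a3 + b3 - a4)" and c=0 and Y="(- a4)" and t=1])
         (use h1 par in simp, use par in simp, simp, simp add: S1f_def algebra_simps)
    have "okd a2 b2 a3 b3 a4 b4 (1) (0) (0) (1) (-1) (1)"
      by (rule G_okd[OF _ _ _ _ _ _ q0 q1]) (use par in simp_all)
    then show ?thesis using m by blast
  next
    assume h0: "4 dvd ((a2 + b3 + a4 - b4) - 2)" and h1: "4 dvd ((b2 + a3 + b3 - a4) - 2)"
    have m: "V3 1 (1) (0) (0) (-1) (1) (-1) \<in> Delta3 \<union> Delta3'"
      using gold_Dp[of "1" "-1" "1"] by simp
    have q0: "4 dvd (S0f a2 b2 a3 b3 a4 b4 (1) (0) (0) (-1) (1) (-1) - 2 * (0))"
      by (rule Hlem[where X="(a2 + b3 + a4 - b4)" and c=2 and Y="(b3)" and t=1])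
         (use h0 par in simp, use par in simp, simp, simp add: S0f_def algebra_simps)
    have q1: "4 dvd (S1f a2 b2 a3 b3 a4 b4 (1) (0) (0) (-1) (1) (-1) - 2 * (1))"
      by (rule Hlem[where X="(b2 + a3 + b3 - a4)" and c=2 and Y="(a3 + b3)" and t=0])
         (use h1 par in simp, use par in simp, simp, simp add: S1f_def algebra_simps)
    have "okd a2 b2 a3 b3 a4 b4 (1) (0) (0) (-1) (1) (-1)"
      by (rule G_okd[OF _ _ _ _ _ _ q0 q1]) (use par in simp_all)
    then show ?thesis using m by blast
  qed
qed

lemma pat5:
  fixes a2 b2 a3 b3 a4 b4 :: int
  assumes par: "odd a2 \<and> odd b2 \<and> odd a3 \<and> even b3 \<and> even a4 \<and> odd b4"
  shows "\<exists>c2 d2 c3 d3 c4 d4. V3 1 c2 d2 c3 d3 c4 d4 \<in> Delta3 \<union> Delta3' \<and> okd a2 b2 a3 b3 a4 b4 c2 d2 c3 d3 c4 d4"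
proof -
  have eX0: "S0f a2 b2 a3 b3 a4 b4 (1) (0) (0) (1) (1) (-1) = (a2 + b3 + a4 - b4)" by (simp add: S0f_def)
  have eX1: "S1f a2 b2 a3 b3 a4 b4 (1) (0) (0) (1) (1) (-1) = (b2 + a3 + b3 - a4)" by (simp add: S1f_def)
  have ev0: "even (a2 + b3 + a4 - b4)" using par by simp
  have ev1: "even (b2 + a3 + b3 - a4)" using par by simp
  from even4[OF ev0] even4[OF ev1] show ?thesis
  proof (elim disjE)
    assume h0: "4 dvd (a2 + b3 + a4 - b4)" and h1: "4 dvd (b2 + a3 + b3 - a4)"
    have m: "V3 1 (-1) (0) (0) (1) (1) (-1) \<in> Delta3 \<union> Delta3'"
      using gold_Dp[of "-1" "1" "1"] by simp
    have q0: "4 dvd (S0f a2 b2 a3 b3 a4 b4 (-1) (0) (0) (1) (1) (-1) - 2 * (1))"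
      by (rule Hlem[where X="(a2 + b3 + a4 - b4)" and c=0 and Y="(a2)" and t=1])
         (use h0 par in simp, use par in simp, simp, simp add: S0f_def algebra_simps)
    have q1: "4 dvd (S1f a2 b2 a3 b3 a4 b4 (-1) (0) (0) (1) (1) (-1) - 2 * (1))"
      by (rule Hlem[where X="(b2 + a3 + b3 - a4)" and c=0 and Y="(b2)" and t=1])
         (use h1 par in simp, use par in simp, simp, simp add: S1f_def algebra_simps)
    have "okd a2 b2 a3 b3 a4 b4 (-1) (0) (0) (1) (1) (-1)"
      by (rule G_okd[OF _ _ _ _ _ _ q0 q1]) (use par in simp_all)
    then show ?thesis using m by blast
  next
    assume h0: "4 dvd (a2 + b3 + a4 - b4)" and h1: "4 dvd ((b2 + a3 + b3 - a4) - 2)"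
    have m: "V3 1 (1) (0) (0) (1) (-1) (1) \<in> Delta3 \<union> Delta3'"
      using gold_Dp[of "1" "1" "-1"] by simp
    have q0: "4 dvd (S0f a2 b2 a3 b3 a4 b4 (1) (0) (0) (1) (-1) (1) - 2 * (1))"
      by (rule Hlem[where X="(a2 + b3 + a4 - b4)" and c=0 and Y="(a4 - b4)" and t=1])
         (use h0 par in simp, use par in simp, simp, simp add: S0f_def algebra_simps)
    have q1: "4 dvd (S1f a2 b2 a3 b3 a4 b4 (1) (0) (0) (1) (-1) (1) - 2 * (1))"
      by (rule Hlem[where X="(b2 + a3 + b3 - a4)" and c=2 and Y="(- a4)" and t=0])
         (use h1 par in simp, use par in simp, simp, simp add: S1f_def algebra_simps)
    have "okd a2 b2 a3 b3 a4 b4 (1) (0) (0) (1) (-1) (1)"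
      by (rule G_okd[OF _ _ _ _ _ _ q0 q1]) (use par in simp_all)
    then show ?thesis using m by blast
  next
    assume h0: "4 dvd ((a2 + b3 + a4 - b4) - 2)" and h1: "4 dvd (b2 + a3 + b3 - a4)"
    have m: "V3 1 (1) (0) (0) (-1) (1) (-1) \<in> Delta3 \<union> Delta3'"
      using gold_Dp[of "1" "-1" "1"] by simp
    have q0: "4 dvd (S0f a2 b2 a3 b3 a4 b4 (1) (0) (0) (-1) (1) (-1) - 2 * (1))"
      by (rule Hlem[where X="(a2 + b3 + a4 - b4)" and c=2 and Y="(b3)" and t=0])
         (use h0 par in simp, use par in simp, simp, simp add: S0f_def algebra_simps)
    have q1: "4 dvd (S1f a2 b2 a3 b3 a4 b4 (1) (0) (0) (-1) (1) (-1) - 2 * (1))"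
      by (rule Hlem[where X="(b2 + a3 + b3 - a4)" and c=0 and Y="(a3 + b3)" and t=1])
         (use h1 par in simp, use par in simp, simp, simp add: S1f_def algebra_simps)
    have "okd a2 b2 a3 b3 a4 b4 (1) (0) (0) (-1) (1) (-1)"
      by (rule G_okd[OF _ _ _ _ _ _ q0 q1]) (use par in simp_all)
    then show ?thesis using m by blast
  next
    assume h0: "4 dvd ((a2 + b3 + a4 - b4) - 2)" and h1: "4 dvd ((b2 + a3 + b3 - a4) - 2)"
    have m: "V3 1 (1) (0) (0) (1) (1) (-1) \<in> Delta3 \<union> Delta3'"
      using gold_Dp[of "1" "1" "1"] by simp
    have q0: "4 dvd (S0f a2 b2 a3 b3 a4 b4 (1) (0) (0) (1) (1) (-1) - 2 * (1))"
      by (rule Hlem[where X="(a2 + b3 + a4 - b4)" and c=2 and Y="0" and t=0])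
         (use h0 par in simp, use par in simp, simp, simp add: S0f_def algebra_simps)
    have q1: "4 dvd (S1f a2 b2 a3 b3 a4 b4 (1) (0) (0) (1) (1) (-1) - 2 * (1))"
      by (rule Hlem[where X="(b2 + a3 + b3 - a4)" and c=2 and Y="0" and t=0])
         (use h1 par in simp, use par in simp, simp, simp add: S1f_def algebra_simps)
    have "okd a2 b2 a3 b3 a4 b4 (1) (0) (0) (1) (1) (-1)"
      by (rule G_okd[OF _ _ _ _ _ _ q0 q1]) (use par in simp_all)
    then show ?thesis using m by blast
  qed
qed

lemma descent_int:
  fixes a2 b2 a3 b3 a4 b4 :: int
  assumes "4 dvd nA a2 b2 a3 b3 a4 b4" "4 dvd nB a2 b2 a3 b3 a4 b4"
    "\<not> (even a2 \<and> even b2 \<and> even a3 \<and> even b3 \<and> even a4 \<and> even b4)"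
  shows "\<exists>c2 d2 c3 d3 c4 d4. V3 1 c2 d2 c3 d3 c4 d4 \<in> Delta3 \<union> Delta3' \<and> okd a2 b2 a3 b3 a4 b4 c2 d2 c3 d3 c4 d4"
  using patterns[OF assms]
  apply (elim disjE)
   apply (erule pat0)
   apply (erule pat1)
   apply (erule pat2)
   apply (erule pat3)
   apply (erule pat4)
  apply (erule pat5)
  done

lemma V3_eqI:
  assumes "a2 * 2^k' = a2' * 2^k" "b2 * 2^k' = b2' * 2^k" "a3 * 2^k' = a3' * 2^k"
          "b3 * 2^k' = b3' * 2^k" "a4 * 2^k' = a4' * 2^k" "b4 * 2^k' = b4' * 2^k"
  shows "V3 k a2 b2 a3 b3 a4 b4 = V3 k' a2' b2' a3' b3' a4' b4'"
proof -
  have e: "zt a b / 2^k = zt a' b' / 2^k'" if "a * 2^k' = a' * 2^k" "b * 2^k' = b' * 2^k" for a b a' b'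
  proof -
    have "(of_int (a * 2^k') :: real) = of_int (a' * 2^k)" "(of_int (b * 2^k') :: real) = of_int (b' * 2^k)"
      using that by simp_all
    then have "zt a b * 2^k' = zt a' b' * 2^k" unfolding zt_def by (simp add: algebra_simps)
    then show ?thesis by (simp add: field_simps)
  qed
  show ?thesis using assms by (simp add: vec4_eq e)
qed

lemma sq_le1: "(x::int) * x \<le> 1 \<Longrightarrow> x = -1 \<or> x = 0 \<or> x = 1"
proof -
  assume "x * x \<le> 1"
  then have "x^2 \<le> 1^2" by (simp add: power2_eq_square)
  then have "\<bar>x\<bar> \<le> \<bar>1\<bar>" using abs_le_square_iff by blast
  then show ?thesis by arith
qed

lemma nz_sq: fixes x :: int assumes "x \<noteq> 0" shows "1 \<le> x * x"
proof -
  have "x < 0 \<or> 0 < x" using assms by linarith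
  then have "0 < x * x" by (auto intro: mult_pos_pos mult_neg_neg)
  then show "1 \<le> x * x" by linarith
qed

lemma base_int:
  fixes a2 b2 a3 b3 a4 b4 :: int
  assumes A: "nA a2 b2 a3 b3 a4 b4 = 1" and B: "nB a2 b2 a3 b3 a4 b4 = 0"
  shows "b2 = 0 \<and> b3 = 0 \<and> b4 = 0 \<and>
     ((a2 \<in> {-1,1} \<and> a3 = 0 \<and> a4 = 0) \<or> (a2 = 0 \<and> a3 \<in> {-1,1} \<and> a4 = 0) \<or> (a2 = 0 \<and> a3 = 0 \<and> a4 \<in> {-1,1}))"
proof -
  have s: "0 \<le> a2 * a2" "0 \<le> b2 * b2" "0 \<le> a3 * a3" "0 \<le> b3 * b3" "0 \<le> a4 * a4" "0 \<le> b4 * b4"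
    by simp_all
  have A': "a2 * a2 + b2 * b2 + a3 * a3 + b3 * b3 + a4 * a4 + b4 * b4 = 1" using A unfolding nA_def .
  have B': "2 * a2 * b2 + b2 * b2 + 2 * a3 * b3 + b3 * b3 + 2 * a4 * b4 + b4 * b4 = 0" using B unfolding nB_def .
  have z: "x * x = 0 \<Longrightarrow> x = 0" for x :: int by simp
  note nz = nz_sq
  have b2: "b2 = 0"
  proof (rule ccontr)
    assume "b2 \<noteq> 0"
    then have "1 \<le> b2 * b2" by (rule nz)
    then have "a2 * a2 = 0" "a3 * a3 = 0" "b3 * b3 = 0" "a4 * a4 = 0" "b4 * b4 = 0" "b2 * b2 = 1"
      using A' s by linarith+
    then show False using B' by simp
  qed
  have b3: "b3 = 0"
  proof (rule ccontr)
    assume "b3 \<noteq> 0"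
    then have "1 \<le> b3 * b3" by (rule nz)
    then have "a2 * a2 = 0" "a3 * a3 = 0" "b2 * b2 = 0" "a4 * a4 = 0" "b4 * b4 = 0" "b3 * b3 = 1"
      using A' s by linarith+
    then show False using B' by simp
  qed
  have b4: "b4 = 0"
  proof (rule ccontr)
    assume "b4 \<noteq> 0"
    then have "1 \<le> b4 * b4" by (rule nz)
    then have "a2 * a2 = 0" "a3 * a3 = 0" "b2 * b2 = 0" "a4 * a4 = 0" "b3 * b3 = 0" "b4 * b4 = 1"
      using A' s by linarith+
    then show False using B' by simp
  qed
  have A'': "a2 * a2 + a3 * a3 + a4 * a4 = 1" using A' b2 b3 b4 by simp
  have "a2 * a2 \<le> 1" "a3 * a3 \<le> 1" "a4 * a4 \<le> 1" using A'' s by linarith+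
  then have "a2 = -1 \<or> a2 = 0 \<or> a2 = 1" "a3 = -1 \<or> a3 = 0 \<or> a3 = 1" "a4 = -1 \<or> a4 = 0 \<or> a4 = 1"
    using sq_le1 by blast+
  then show ?thesis using A'' b2 b3 b4 by auto
qed

abbreviation "e2v \<equiv> V3 0 1 0 0 0 0 0"

lemma H3_step: "a \<in> Delta3 \<union> Delta3' \<Longrightarrow> h \<in> Hinf3 \<Longrightarrow> refl a \<circ> h \<in> Hinf3"
  unfolding Hinf3_def by (rule rg_step)

lemma H3_id: "id \<in> Hinf3" unfolding Hinf3_def by (rule rg_id)

lemma unit3: "a \<in> Delta3 \<union> Delta3' \<Longrightarrow> a \<bullet> a = 1"
  using unit_roots(2) unfolding unitset_def by blast

lemma refl_V3s: "refl (V3 (Suc 0) c2 d2 c3 d3 c4 d4) (V3 k a2 b2 a3 b3 a4 b4) =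
  (let S0 = a2*c2+b2*d2+a3*c3+b3*d3+a4*c4+b4*d4;
       S1 = a2*d2+b2*c2+b2*d2+a3*d3+b3*c3+b3*d3+a4*d4+b4*c4+b4*d4 in
   V3 (Suc k) (2*a2 - S0*c2 - S1*d2) (2*b2 - S0*d2 - S1*c2 - S1*d2)
              (2*a3 - S0*c3 - S1*d3) (2*b3 - S0*d3 - S1*c3 - S1*d3)
              (2*a4 - S0*c4 - S1*d4) (2*b4 - S0*d4 - S1*c4 - S1*d4))"
  using refl_V3 by simp

lemma chain_e3: "\<exists>h\<in>Hinf3. h e2v = V3 0 0 0 1 0 0 0"
proof -
  have m0: "V3 1 (-1) 0 0 1 1 (-1) \<in> Delta3 \<union> Delta3'" using gold_Dp[of "-1" 1 1] by simp
  have m1: "V3 1 (-1) 0 0 (-1) 1 (-1) \<in> Delta3 \<union> Delta3'" using gold_Dp[of "-1" "-1" 1] by simp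
  have m2: "V3 1 1 0 0 1 1 (-1) \<in> Delta3 \<union> Delta3'" using gold_Dp[of 1 1 1] by simp
  let ?h = "refl (V3 1 (-1) 0 0 1 1 (-1)) \<circ> (refl (V3 1 (-1) 0 0 (-1) 1 (-1)) \<circ> (refl (V3 1 1 0 0 1 1 (-1)) \<circ> id))"
  have "?h \<in> Hinf3" by (intro H3_step m0 m1 m2 H3_id)
  moreover have "?h e2v = V3 0 0 0 1 0 0 0"
    apply (simp add: refl_V3s Let_def)
    apply (rule V3_eqI)
    by simp_all
  ultimately show ?thesis by blast
qed

lemma chain_e4: "\<exists>h\<in>Hinf3. h e2v = V3 0 0 0 0 0 1 0"
proof -
  have m0: "V3 1 (-1) 0 0 1 1 (-1) \<in> Delta3 \<union> Delta3'" using gold_Dp[of "-1" 1 1] by simp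
  have m1: "V3 1 (-1) 0 0 1 (-1) 1 \<in> Delta3 \<union> Delta3'" using gold_Dp[of "-1" 1 "-1"] by simp
  have m2: "V3 1 1 0 0 1 1 (-1) \<in> Delta3 \<union> Delta3'" using gold_Dp[of 1 1 1] by simp
  let ?h = "refl (V3 1 (-1) 0 0 1 1 (-1)) \<circ> (refl (V3 1 (-1) 0 0 1 (-1) 1) \<circ> (refl (V3 1 1 0 0 1 1 (-1)) \<circ> id))"
  have "?h \<in> Hinf3" by (intro H3_step m0 m1 m2 H3_id)
  moreover have "?h e2v = V3 0 0 0 0 0 1 0"
    apply (simp add: refl_V3s Let_def)
    apply (rule V3_eqI)
    by simp_all
  ultimately show ?thesis by blast
qed

lemma neg_chain: assumes "h \<in> Hinf3" "h e2v = V3 0 a2 b2 a3 b3 a4 b4" "V3 1 (2*a2) 0 (2*a3) 0 (2*a4) 0 \<in> Delta3 \<union> Delta3'"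
  "b2 = 0" "b3 = 0" "b4 = 0" "a2*a2 + a3*a3 + a4*a4 = 1"
  shows "\<exists>h\<in>Hinf3. h e2v = V3 0 (-a2) 0 (-a3) 0 (-a4) 0"
proof -
  have "refl (V3 1 (2*a2) 0 (2*a3) 0 (2*a4) 0) \<circ> h \<in> Hinf3" by (rule H3_step[OF assms(3,1)])
  moreover have "(refl (V3 1 (2*a2) 0 (2*a3) 0 (2*a4) 0) \<circ> h) e2v = V3 0 (-a2) 0 (-a3) 0 (-a4) 0"
  proof -
    have "(refl (V3 1 (2*a2) 0 (2*a3) 0 (2*a4) 0) \<circ> h) e2v = refl (V3 1 (2*a2) 0 (2*a3) 0 (2*a4) 0) (V3 0 a2 0 a3 0 a4 0)"
      using assms(2,4,5,6) by simp
    also have "\<dots> = V3 (Suc 0) (2*a2 - 4*(a2*a2 + a3*a3 + a4*a4)*a2) 0 (2*a3 - 4*(a2*a2 + a3*a3 + a4*a4)*a3) 0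
        (2*a4 - 4*(a2*a2 + a3*a3 + a4*a4)*a4) 0"
      unfolding refl_V3 Let_def by (simp add: algebra_simps)
    also have "\<dots> = V3 (Suc 0) (2*(-a2)) (2*0) (2*(-a3)) (2*0) (2*(-a4)) (2*0)" using assms(7) by simp
    also have "\<dots> = V3 0 (-a2) 0 (-a3) 0 (-a4) 0" by (rule V3_half)
    finally show ?thesis .
  qed
  ultimately show ?thesis by blast
qed

lemma base3: assumes "nA a2 b2 a3 b3 a4 b4 = 1" "nB a2 b2 a3 b3 a4 b4 = 0"
  shows "\<exists>h\<in>Hinf3. h e2v = V3 0 a2 b2 a3 b3 a4 b4"
proof -
  have c2: "V3 1 2 0 0 0 0 0 \<in> Delta3 \<union> Delta3'" "V3 1 0 0 2 0 0 0 \<in> Delta3 \<union> Delta3'"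
     "V3 1 0 0 0 0 2 0 \<in> Delta3 \<union> Delta3'" using coord_D by auto
  have p2: "\<exists>h\<in>Hinf3. h e2v = V3 0 1 0 0 0 0 0" by (rule bexI[of _ id]) (simp_all add: H3_id)
  have p3: "\<exists>h\<in>Hinf3. h e2v = V3 0 0 0 1 0 0 0" by (rule chain_e3)
  have p4: "\<exists>h\<in>Hinf3. h e2v = V3 0 0 0 0 0 1 0" by (rule chain_e4)
  have n2: "\<exists>h\<in>Hinf3. h e2v = V3 0 (-1) 0 0 0 0 0"
    using p2 neg_chain[of _ 1 0 0 0 0 0] c2(1) by fastforce
  have n3: "\<exists>h\<in>Hinf3. h e2v = V3 0 0 0 (-1) 0 0 0"
    using p3 neg_chain[of _ 0 0 1 0 0 0] c2(2) by fastforce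
  have n4: "\<exists>h\<in>Hinf3. h e2v = V3 0 0 0 0 0 (-1) 0"
    using p4 neg_chain[of _ 0 0 0 0 1 0] c2(3) by fastforce
  show ?thesis using base_int[OF assms] p2 p3 p4 n2 n3 n4 by auto
qed

lemma descent3: "V3 k a2 b2 a3 b3 a4 b4 \<bullet> V3 k a2 b2 a3 b3 a4 b4 = 1 \<Longrightarrow>
   \<exists>h\<in>Hinf3. h e2v = V3 k a2 b2 a3 b3 a4 b4"
proof (induction k arbitrary: a2 b2 a3 b3 a4 b4)
  case 0
  then show ?case using base3 V3_norm1[of 0] by simp
next
  case (Suc k)
  from Suc.prems have nAB: "nA a2 b2 a3 b3 a4 b4 = 4^(Suc k)" "nB a2 b2 a3 b3 a4 b4 = 0"
    using V3_norm1 by blast+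
  show ?case
  proof (cases "even a2 \<and> even b2 \<and> even a3 \<and> even b3 \<and> even a4 \<and> even b4")
    case True
    then obtain a2' b2' a3' b3' a4' b4' where e: "a2 = 2*a2'" "b2 = 2*b2'" "a3 = 2*a3'" "b3 = 2*b3'" "a4 = 2*a4'" "b4 = 2*b4'"
      by (metis evenE)
    have eq: "V3 (Suc k) a2 b2 a3 b3 a4 b4 = V3 k a2' b2' a3' b3' a4' b4'" unfolding e by (rule V3_half)
    show ?thesis using Suc.IH[of a2' b2' a3' b3' a4' b4'] Suc.prems unfolding eq by simp
  next
    case False
    have d: "4 dvd nA a2 b2 a3 b3 a4 b4" "4 dvd nB a2 b2 a3 b3 a4 b4" using nAB by simp_all
    obtain c2 d2 c3 d3 c4 d4 where r: "V3 1 c2 d2 c3 d3 c4 d4 \<in> Delta3 \<union> Delta3'"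
      and ok: "okd a2 b2 a3 b3 a4 b4 c2 d2 c3 d3 c4 d4"
      using descent_int[OF d False] by blast
    let ?r = "V3 1 c2 d2 c3 d3 c4 d4"
    define S0 where "S0 = a2*c2+b2*d2+a3*c3+b3*d3+a4*c4+b4*d4"
    define S1 where "S1 = a2*d2+b2*c2+b2*d2+a3*d3+b3*c3+b3*d3+a4*d4+b4*c4+b4*d4"
    from ok have "4 dvd (2*a2 - S0*c2 - S1*d2)" "4 dvd (2*b2 - S0*d2 - S1*c2 - S1*d2)"
      "4 dvd (2*a3 - S0*c3 - S1*d3)" "4 dvd (2*b3 - S0*d3 - S1*c3 - S1*d3)"
      "4 dvd (2*a4 - S0*c4 - S1*d4)" "4 dvd (2*b4 - S0*d4 - S1*c4 - S1*d4)"
      unfolding okd_def Let_def S0f_def S1f_def S0_def S1_def by auto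
    then obtain q1 q2 q3 q4 q5 q6 where q: "2*a2 - S0*c2 - S1*d2 = 4*q1" "2*b2 - S0*d2 - S1*c2 - S1*d2 = 4*q2"
      "2*a3 - S0*c3 - S1*d3 = 4*q3" "2*b3 - S0*d3 - S1*c3 - S1*d3 = 4*q4"
      "2*a4 - S0*c4 - S1*d4 = 4*q5" "2*b4 - S0*d4 - S1*c4 - S1*d4 = 4*q6"
      unfolding dvd_def by metis
    have rx: "refl ?r (V3 (Suc k) a2 b2 a3 b3 a4 b4) = V3 k q1 q2 q3 q4 q5 q6"
      unfolding refl_V3 Let_def S0_def[symmetric] S1_def[symmetric] q by (rule V3_quarter)
    have ru: "?r \<bullet> ?r = 1" using unit3[OF r] .
    have "V3 k q1 q2 q3 q4 q5 q6 \<bullet> V3 k q1 q2 q3 q4 q5 q6 = 1"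
      unfolding rx[symmetric] refl_inner[OF ru] using Suc.prems .
    from Suc.IH[OF this] obtain h where h: "h \<in> Hinf3" "h e2v = V3 k q1 q2 q3 q4 q5 q6" by blast
    have "refl ?r \<circ> h \<in> Hinf3" by (rule H3_step[OF r h(1)])
    moreover have "(refl ?r \<circ> h) e2v = V3 (Suc k) a2 b2 a3 b3 a4 b4"
      using h(2) rx[symmetric] refl_refl[OF ru] by simp
    ultimately show ?thesis by blast
  qed
qed

definition e1v :: "real^4" where "e1v = (\<chi> j. if j = 1 then 1 else 0)"

lemma e1v_comp [simp]: "e1v$1 = 1" "e1v$2 = 0" "e1v$3 = 0" "e1v$4 = 0" unfolding e1v_def by simp_all

lemma unitH: "unitset (Delta \<union> Delta')" by (rule unit_roots(1))
lemma unitH3: "unitset (Delta3 \<union> Delta3')" by (rule unit_roots(2))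

lemma D3_sub: "Delta3 \<union> Delta3' \<subseteq> Delta \<union> Delta'" unfolding Delta3_def Delta3'_def by auto
lemma H3_sub: "h \<in> Hinf3 \<Longrightarrow> h \<in> Hinf" unfolding Hinf3_def Hinf_def using rg_mono D3_sub by blast

lemma H_inner: "g \<in> Hinf \<Longrightarrow> g x \<bullet> g y = x \<bullet> y"
  using rg_props[OF unitH] unfolding Hinf_def by blast
lemma H_inv: "g \<in> Hinf \<Longrightarrow> \<exists>h\<in>Hinf. \<forall>x. h (g x) = x \<and> g (h x) = x"
  using rg_props[OF unitH] unfolding Hinf_def by blast
lemma H3_inv: "g \<in> Hinf3 \<Longrightarrow> \<exists>h\<in>Hinf3. \<forall>x. h (g x) = x \<and> g (h x) = x"
  using rg_props[OF unitH3] unfolding Hinf3_def by blast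
lemma H_comp: "g \<in> Hinf \<Longrightarrow> h \<in> Hinf \<Longrightarrow> g \<circ> h \<in> Hinf" unfolding Hinf_def by (rule rg_comp)
lemma H3_comp: "g \<in> Hinf3 \<Longrightarrow> h \<in> Hinf3 \<Longrightarrow> g \<circ> h \<in> Hinf3" unfolding Hinf3_def by (rule rg_comp)
lemma H_refl: "a \<in> Delta \<union> Delta' \<Longrightarrow> refl a \<in> Hinf" unfolding Hinf_def by (rule rg_refl)

lemma D3_V: "a \<in> Delta3 \<union> Delta3' \<Longrightarrow> a$1 = 0" unfolding Delta3_def Delta3'_def V_def by auto

lemma H3_fix1: "h \<in> Hinf3 \<Longrightarrow> h x $ 1 = x $ 1"
  using rg_fix1[OF unitH3] D3_V unfolding Hinf3_def by blast

lemma rg_fix: assumes "unitset A" "\<forall>a\<in>A. x \<bullet> a = 0" "g \<in> refl_group A" shows "g x = x"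
  using assms(3)
proof (induction rule: refl_group.induct)
  case rg_id then show ?case by simp
next
  case (rg_step a g) then show ?case using assms(2) by (simp add: refl_def)
next
  case (rg_step_inv a g)
  have aa: "a \<bullet> a = 1" using assms(1) rg_step_inv(1) unfolding unitset_def by auto
  show ?case using rg_step_inv assms(2) by (simp add: refl_def inv_refl[OF aa])
qed

lemma H3_fix_e1: "h \<in> Hinf3 \<Longrightarrow> h e1v = e1v"
proof -
  assume h: "h \<in> Hinf3"
  have "\<forall>a\<in>Delta3 \<union> Delta3'. e1v \<bullet> a = 0" using D3_V by (simp add: inner4)
  then show ?thesis using rg_fix[OF unitH3 _ h[unfolded Hinf3_def]] by blast
qed

definition latt :: "real^4 \<Rightarrow> bool" where "latt x \<longleftrightarrow> (\<exists>k. lat k x)"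

lemma H_latt: assumes "g \<in> Hinf" "latt x" shows "latt (g x)"
  using assms(1)[unfolded Hinf_def] assms(2)
proof (induction arbitrary: x rule: refl_group.induct)
  case rg_id then show ?case by simp
next
  case (rg_step a g)
  then obtain k where "lat k (g x)" unfolding latt_def by blast
  then have "lat (Suc k) (refl a (g x))" using lat_refl roots_lat[OF rg_step(1)] by blast
  then show ?case unfolding latt_def by auto
next
  case (rg_step_inv a g)
  have aa: "a \<bullet> a = 1" using unitH rg_step_inv(1) unfolding unitset_def by auto
  from rg_step_inv obtain k where "lat k (g x)" unfolding latt_def by blast
  then have "lat (Suc k) (refl a (g x))" using lat_refl roots_lat[OF rg_step_inv(1)] by blast
  then show ?case unfolding latt_def by (auto simp: inv_refl[OF aa])
qed

lemma root_unit: "a \<in> Delta \<union> Delta' \<Longrightarrow> a \<bullet> a = 1" using unitH unfolding unitset_def by blast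

lemma Sigma_props: "y \<in> Sigma \<Longrightarrow> y \<bullet> y = 1 \<and> latt y"
proof -
  assume "y \<in> Sigma"
  then obtain g a where g: "g \<in> Hinf" "a \<in> Delta \<union> Delta'" "y = g a" unfolding Sigma_def by blast
  have "latt a" using roots_lat[OF g(2)] unfolding latt_def by blast
  then show ?thesis using g H_inner[OF g(1)] root_unit[OF g(2)] H_latt[OF g(1)] by simp
qed

lemma toV3: assumes "x$1 = 0" "lat k x" shows "\<exists>a2 b2 a3 b3 a4 b4. x = V3 k a2 b2 a3 b3 a4 b4"
proof -
  have "\<forall>j. \<exists>a b. 2^k * x$j = zt a b" using assms(2) unfolding lat_def isZ_def by blast
  then obtain a2 b2 a3 b3 a4 b4 where "2^k * x$2 = zt a2 b2" "2^k * x$3 = zt a3 b3" "2^k * x$4 = zt a4 b4"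
    by meson
  then have "x = V3 k a2 b2 a3 b3 a4 b4" using assms(1) by (simp add: vec4_eq field_simps)
  then show ?thesis by blast
qed

lemma e2v_D3: "e2v \<in> Delta3 \<union> Delta3'"
proof -
  have "e2v = V3 1 (2*1) (2*0) (2*0) (2*0) (2*0) (2*0)" using V3_half[of 0 1 0 0 0 0 0] by simp
  then show ?thesis using coord_D(1) by simp
qed

lemma P3desc: assumes "x$1 = 0" "x \<bullet> x = 1" "latt x" shows "\<exists>h\<in>Hinf3. h e2v = x"
proof -
  obtain k where "lat k x" using assms(3) unfolding latt_def by blast
  then obtain a2 b2 a3 b3 a4 b4 where x: "x = V3 k a2 b2 a3 b3 a4 b4" using toV3 assms(1) by blast
  show ?thesis using descent3[of k a2 b2 a3 b3 a4 b4] assms(2) unfolding x by simp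
qed

lemma Sigma3_props: "y \<in> Sigma3 \<Longrightarrow> y$1 = 0 \<and> y \<bullet> y = 1 \<and> latt y \<and> y \<in> Sigma"
proof -
  assume "y \<in> Sigma3"
  then obtain h a where h: "h \<in> Hinf3" "a \<in> Delta3 \<union> Delta3'" "y = h a" unfolding Sigma3_def by blast
  have a: "a \<in> Delta \<union> Delta'" using h(2) D3_sub by blast
  have "y \<in> Sigma" unfolding Sigma_def using H3_sub[OF h(1)] a h(3) by blast
  then show ?thesis using Sigma_props h H3_fix1 D3_V by simp
qed

definition Orb :: "(real^4) set" where "Orb = {y. \<exists>g\<in>Hinf. g e1v = y}"

lemma Orb_e1: "e1v \<in> Orb" unfolding Orb_def by (rule CollectI, rule bexI[of _ id]) (simp_all add: Hinf_def rg_id)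

lemma Orb_refl: "y \<in> Orb \<Longrightarrow> c \<in> Delta \<union> Delta' \<Longrightarrow> refl c y \<in> Orb"
proof -
  assume "y \<in> Orb" "c \<in> Delta \<union> Delta'"
  then obtain g where "g \<in> Hinf" "g e1v = y" unfolding Orb_def by blast
  then have "refl c \<circ> g \<in> Hinf" "(refl c \<circ> g) e1v = refl c y"
    using rg_step[of c "Delta \<union> Delta'" g] \<open>c \<in> Delta \<union> Delta'\<close> unfolding Hinf_def by auto
  then show ?thesis unfolding Orb_def by blast
qed

lemma reflL: assumes "a \<bullet> a = 1" "b \<bullet> b = 1" "a \<bullet> b = 1/2" shows "refl (a - b) a = b"
proof -
  have h: "2 * (a \<bullet> (a - b)) = 1" using assms by (simp add: inner_diff_right)
  show ?thesis unfolding refl_def h by simp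
qed

lemma refl_self: "a \<bullet> a = 1 \<Longrightarrow> refl a a = - a" unfolding refl_def by (simp add: scaleR_2)
lemma refl_neg: "a \<bullet> a = 1 \<Longrightarrow> refl a (- a) = a" unfolding refl_def by (simp add: scaleR_2)

lemma half_in: fixes x :: "real^4" assumes "\<forall>j. x$j = 1/2 \<or> x$j = -1/2" shows "x \<in> Delta_gen t t'"
proof -
  have sj: "2*x$j \<in> {-1, 1::real}" for j
  proof -
    from assms have "x$j = 1/2 \<or> x$j = -1/2" by blast
    then show ?thesis by auto
  qed
  have s: "{2*x$1, 2*x$2, 2*x$3, 2*x$4} \<subseteq> {-1, 1::real}" using sj by blast
  have e: "x = vector [(2*x$1)/2, (2*x$2)/2, (2*x$3)/2, (2*x$4)/2]" by (simp add: vec4_eq)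
  show ?thesis unfolding Delta_gen_def
    apply (rule UnI1, rule UnI2, rule CollectI)
    apply (rule exI[of _ "2*x$1"], rule exI[of _ "2*x$2"], rule exI[of _ "2*x$3"], rule exI[of _ "2*x$4"])
    using s e by blast
qed

lemma half_unit: fixes x :: "real^4" assumes "\<forall>j. x$j = 1/2 \<or> x$j = -1/2" shows "x \<bullet> x = 1"
proof -
  have q: "x$j * x$j = 1/4" for j
  proof -
    from assms have "x$j = 1/2 \<or> x$j = -1/2" by blast
    then have a: "\<bar>x$j\<bar> = 1/2" by auto
    have "x$j * x$j = \<bar>x$j\<bar> * \<bar>x$j\<bar>" by (simp add: abs_mult_self)
    also have "\<dots> = 1/2 * (1/2)" unfolding a by (rule refl)
    finally show ?thesis by simp
  qed
  show ?thesis unfolding inner4 using q[of 1] q[of 2] q[of 3] q[of 4] by linarith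
qed

lemma half_D: "\<forall>j. (x::real^4)$j = 1/2 \<or> x$j = -1/2 \<Longrightarrow> x \<in> Delta \<union> Delta'"
  unfolding Delta_def using half_in by blast


lemma half_Orb: fixes x :: "real^4" assumes h: "\<forall>j. x$j = 1/2 \<or> x$j = -1/2" shows "x \<in> Orb"
proof -
  have pos: "y \<in> Orb" if y: "\<forall>j. y$j = 1/2 \<or> y$j = -1/2" "y$1 = 1/2" for y
  proof -
    have "\<forall>j. (e1v - y)$j = 1/2 \<or> (e1v - y)$j = -1/2"
      using y unfolding forall_4 by auto
    then have c: "e1v - y \<in> Delta \<union> Delta'" by (rule half_D)
    have "e1v \<bullet> e1v = 1" by (simp add: inner4)
    moreover have "e1v \<bullet> y = 1/2" using y by (simp add: inner4)
    ultimately have "refl (e1v - y) e1v = y" using reflL half_unit[OF y(1)] by blast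
    then show ?thesis using Orb_refl[OF Orb_e1 c] by simp
  qed
  show ?thesis
  proof (cases "x$1 = 1/2")
    case True then show ?thesis using pos h by blast
  next
    case False
    then have "(-x)$1 = 1/2" using h by auto
    moreover have "\<forall>j. (-x)$j = 1/2 \<or> (-x)$j = -1/2" using h by auto
    ultimately have "-x \<in> Orb" using pos by blast
    then have "refl x (-x) \<in> Orb" using Orb_refl half_D[OF h] by blast
    then show ?thesis using refl_neg[OF half_unit[OF h]] by simp
  qed
qed

lemma ax_Orb: assumes "s \<in> {-1,1::real}" shows "(\<chi> j. if j = i then s else 0) \<in> Orb"
proof -
  let ?e = "(\<chi> j. if j = i then 1 else 0) :: real^4"
  have eD: "?e \<in> Delta \<union> Delta'" unfolding Delta_def using in_first[of 1 ?e i] by simp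
  have eu: "?e \<bullet> ?e = 1" using root_unit[OF eD] .
  have "?e \<in> Orb"
  proof -
    let ?h = "(\<chi> j. 1/2) :: real^4"
    have hh: "\<forall>j. ?h$j = 1/2 \<or> ?h$j = -1/2" by simp
    have hd: "\<forall>j. (?h - ?e)$j = 1/2 \<or> (?h - ?e)$j = -1/2" by simp
    have "?h \<bullet> ?e = 1/2" by (simp add: inner_vec_def if_distrib cong: if_cong)
    then have "refl (?h - ?e) ?h = ?e" using reflL half_unit[OF hh] eu by blast
    then show ?thesis using Orb_refl[OF half_Orb[OF hh] half_D[OF hd]] by simp
  qed
  moreover have "refl ?e ?e = (\<chi> j. if j = i then -1 else 0)" using refl_self[OF eu]
    by (simp add: vec_eq_iff)
  moreover have "refl ?e ?e \<in> Orb" using Orb_refl[OF \<open>?e \<in> Orb\<close> eD] .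
  moreover have "s = 1 \<or> s = -1" using assms by auto
  ultimately show ?thesis by auto
qed

lemma sigma_even: "evenperm (Transposition.transpose (1::4) 2 \<circ> Transposition.transpose 3 4)"
  "(Transposition.transpose (1::4) 2 \<circ> Transposition.transpose 3 4) permutes UNIV"
proof -
  show "evenperm (Transposition.transpose (1::4) 2 \<circ> Transposition.transpose 3 4)"
    by (simp add: evenperm_comp permutation_swap_id evenperm_swap)
  show "(Transposition.transpose (1::4) 2 \<circ> Transposition.transpose 3 4) permutes UNIV"
    by (intro permutes_compose permutes_swap_id) auto
qed

lemma gold_Orb: assumes t: "(t = tau \<and> t' = tau') \<or> (t = tau' \<and> t' = tau)"
  and p: "p permutes (UNIV :: 4 set)" "evenperm p" and s: "{s1,s2,s3} \<subseteq> {-1,1::real}"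
  and x: "x = (\<chi> j. (vector [0, s1 / 2, s2 * t' / 2, s3 * t / 2] :: real^4) $ p j)"
  shows "x \<in> Orb"
proof -
  have tt: "t + t' = 1" "t*t + t'*t' = 3" using t tau_sum1 tau_sum3 by (auto simp: algebra_simps)
  let ?v = "(vector [0, s1 / 2, s2 * t' / 2, s3 * t / 2] :: real^4)"
  let ?w = "(vector [1/2, s1 / 2, s2 / 2, s3 / 2] :: real^4)"
  let ?u = "(vector [0, 1/2, s3 * t' / 2, s2 * t / 2] :: real^4)"
  let ?s = "Transposition.transpose (1::4) 2 \<circ> Transposition.transpose 3 4"
  let ?h = "(\<chi> j. ?w $ p j)"
  have hh: "\<forall>j. ?h$j = 1/2 \<or> ?h$j = -1/2"
  proof
    fix j
    have "\<forall>i. ?w$i = 1/2 \<or> ?w$i = -1/2" unfolding forall_4 using s by auto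
    then show "?h$j = 1/2 \<or> ?h$j = -1/2" by simp
  qed
  have xD: "x \<in> Delta_gen t t'" unfolding Delta_gen_def x
    apply (rule UnI2, rule CollectI)
    apply (rule exI[of _ p], rule exI[of _ s1], rule exI[of _ s2], rule exI[of _ s3])
    using p s by simp
  have xu: "x \<bullet> x = 1" using Delta_gen_unit[OF tt(2) xD] .
  have hx: "?h \<bullet> x = 1/2"
  proof -
    have "?h \<bullet> x = (\<Sum>j\<in>UNIV. ((\<lambda>i. ?w$i * ?v$i) \<circ> p) j)"
      unfolding inner_vec_def x by simp
    also have "\<dots> = (\<Sum>i\<in>UNIV. ?w$i * ?v$i)" using sum.permute[OF p(1), of "\<lambda>i. ?w$i * ?v$i"] by (simp add: comp_def)
    also have "\<dots> = ((s1 * s1) + (s2 * s2) * t' + (s3 * s3) * t)/4" by (simp add: sum_4 field_simps)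
    also have "\<dots> = 1/2" using s tt(1) by (auto simp: algebra_simps)
    finally show ?thesis .
  qed
  have dD: "?h - x \<in> Delta_gen t t'"
  proof -
    have "?h - x = (\<chi> j. ?u $ (?s \<circ> p) j)"
    proof -
      have "?w$i - ?v$i = ?u$(?s i)" for i
      proof -
        have "i = 1 \<or> i = 2 \<or> i = 3 \<or> i = 4" by (rule exhaust_4)
        moreover have "s2 * t + s2 * t' = s2" "s3 * t + s3 * t' = s3" using tt(1)
          by (metis distrib_left mult.right_neutral)+
        ultimately show ?thesis by (auto simp: algebra_simps)
      qed
      then show ?thesis unfolding x by (simp add: vec_eq_iff)
    qed
    moreover have "{1, s3, s2} \<subseteq> {-1, 1::real}" using s by auto
    moreover have "(?s \<circ> p) permutes UNIV" using permutes_compose[OF p(1) sigma_even(2)] .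
    moreover have "evenperm (?s \<circ> p)"
    proof -
      have "permutation ?s" using sigma_even(2) finite_UNIV by (auto simp: permutation_permutes)
      moreover have "permutation p" using p(1) finite_UNIV by (auto simp: permutation_permutes)
      ultimately show ?thesis using evenperm_comp[of ?s p] sigma_even(1) p(2) by simp
    qed
    ultimately show ?thesis unfolding Delta_gen_def
      apply -
      apply (rule UnI2, rule CollectI)
      apply (rule exI[of _ "?s \<circ> p"], rule exI[of _ 1], rule exI[of _ s3], rule exI[of _ s2])
      by simp
  qed
  have D: "Delta_gen t t' \<subseteq> Delta \<union> Delta'" using t unfolding Delta_def Delta'_def by auto
  have "refl (?h - x) ?h = x" using reflL[OF half_unit[OF hh] xu hx] .
  then show ?thesis using Orb_refl[OF half_Orb[OF hh]] dD D by force
qed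

lemma roots_Orb: assumes "a \<in> Delta \<union> Delta'" shows "a \<in> Orb"
proof -
  obtain t t' where t: "(t = tau \<and> t' = tau') \<or> (t = tau' \<and> t' = tau)" and a: "a \<in> Delta_gen t t'"
    using assms unfolding Delta_def Delta'_def by blast
  from a show ?thesis
  proof (cases rule: Delta_gen_cases)
    case (a i s) then show ?thesis using ax_Orb by simp
  next
    case (b s1 s2 s3 s4)
    then have "\<forall>j. a$j = 1/2 \<or> a$j = -1/2" unfolding forall_4 by auto
    then show ?thesis by (rule half_Orb)
  next
    case (c p s1 s2 s3) then show ?thesis using gold_Orb[OF t] by blast
  qed
qed

lemma Sigma_Orb: "y \<in> Sigma \<Longrightarrow> \<exists>g\<in>Hinf. g e1v = y"
proof -
  assume "y \<in> Sigma"
  then obtain g a where g: "g \<in> Hinf" "a \<in> Delta \<union> Delta'" "y = g a" unfolding Sigma_def by blast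
  obtain g' where g': "g' \<in> Hinf" "g' e1v = a" using roots_Orb[OF g(2)] unfolding Orb_def by blast
  show ?thesis using H_comp[OF g(1) g'(1)] g(3) g'(2) by (intro bexI[of _ "g \<circ> g'"]) auto
qed

theorem mainTheorem10:
  shows "(\<forall>\<alpha>\<in>Sigma. \<forall>\<beta>\<in>Sigma. \<exists>g\<in>Hinf. g \<alpha> = \<beta>)
    \<and> (\<forall>\<alpha>\<in>Sigma3. \<forall>\<beta>\<in>Sigma3. \<exists>g\<in>Hinf3. g \<alpha> = \<beta>)
    \<and> (\<forall>\<alpha>\<in>Sigma. \<exists>g\<in>Hinf. {\<beta>\<in>Sigma. \<beta> \<bullet> \<alpha> = 0} = g ` Sigma3)
    \<and> (\<forall>\<alpha>\<in>Sigma. \<exists>g\<in>Hinf. \<forall>h\<in>Hinf3.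
          g \<circ> h \<circ> inv g \<in> Hinf \<and> (g \<circ> h \<circ> inv g) \<alpha> = \<alpha>)"
proof (intro conjI)
  show "\<forall>\<alpha>\<in>Sigma. \<forall>\<beta>\<in>Sigma. \<exists>g\<in>Hinf. g \<alpha> = \<beta>"
  proof (intro ballI)
    fix \<alpha> \<beta> assume a: "\<alpha> \<in> Sigma" and b: "\<beta> \<in> Sigma"
    obtain g1 where g1: "g1 \<in> Hinf" "g1 e1v = \<alpha>" using Sigma_Orb[OF a] by blast
    obtain g2 where g2: "g2 \<in> Hinf" "g2 e1v = \<beta>" using Sigma_Orb[OF b] by blast
    obtain h1 where h1: "h1 \<in> Hinf" "\<forall>x. h1 (g1 x) = x \<and> g1 (h1 x) = x" using H_inv[OF g1(1)] by blast
    have "g2 \<circ> h1 \<in> Hinf" by (rule H_comp[OF g2(1) h1(1)])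
    moreover have "(g2 \<circ> h1) \<alpha> = \<beta>" using g1(2) g2(2) h1(2) by auto
    ultimately show "\<exists>g\<in>Hinf. g \<alpha> = \<beta>" by blast
  qed
next
  show "\<forall>\<alpha>\<in>Sigma3. \<forall>\<beta>\<in>Sigma3. \<exists>g\<in>Hinf3. g \<alpha> = \<beta>"
  proof (intro ballI)
    fix \<alpha> \<beta> assume a: "\<alpha> \<in> Sigma3" and b: "\<beta> \<in> Sigma3"
    obtain g1 where g1: "g1 \<in> Hinf3" "g1 e2v = \<alpha>" using P3desc Sigma3_props[OF a] by blast
    obtain g2 where g2: "g2 \<in> Hinf3" "g2 e2v = \<beta>" using P3desc Sigma3_props[OF b] by blast
    obtain h1 where h1: "h1 \<in> Hinf3" "\<forall>x. h1 (g1 x) = x \<and> g1 (h1 x) = x" using H3_inv[OF g1(1)] by blast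
    have "g2 \<circ> h1 \<in> Hinf3" by (rule H3_comp[OF g2(1) h1(1)])
    moreover have "(g2 \<circ> h1) \<alpha> = \<beta>" using g1(2) g2(2) h1(2) by auto
    ultimately show "\<exists>g\<in>Hinf3. g \<alpha> = \<beta>" by blast
  qed
next
  show "\<forall>\<alpha>\<in>Sigma. \<exists>g\<in>Hinf. {\<beta>\<in>Sigma. \<beta> \<bullet> \<alpha> = 0} = g ` Sigma3"
  proof
    fix \<alpha> assume a: "\<alpha> \<in> Sigma"
    obtain g where g: "g \<in> Hinf" "g e1v = \<alpha>" using Sigma_Orb[OF a] by blast
    obtain gi where gi: "gi \<in> Hinf" "\<forall>x. gi (g x) = x \<and> g (gi x) = x" using H_inv[OF g(1)] by blast
    have "{\<beta>\<in>Sigma. \<beta> \<bullet> \<alpha> = 0} = g ` Sigma3"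
    proof
      show "{\<beta>\<in>Sigma. \<beta> \<bullet> \<alpha> = 0} \<subseteq> g ` Sigma3"
      proof
        fix \<beta> assume "\<beta> \<in> {\<beta>\<in>Sigma. \<beta> \<bullet> \<alpha> = 0}"
        then have b: "\<beta> \<in> Sigma" "\<beta> \<bullet> \<alpha> = 0" by auto
        obtain g' c where gc: "g' \<in> Hinf" "c \<in> Delta \<union> Delta'" "\<beta> = g' c" using b(1) unfolding Sigma_def by blast
        have yS: "gi \<beta> \<in> Sigma" unfolding Sigma_def mem_Collect_eq
          using H_comp[OF gi(1) gc(1)] gc by (intro exI[of _ "gi \<circ> g'"] exI[of _ c]) auto
        have "gi \<beta> \<bullet> e1v = 0"
        proof -
          have "gi \<beta> \<bullet> e1v = gi \<beta> \<bullet> gi \<alpha>" using gi(2) g(2) by metis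
          also have "\<dots> = \<beta> \<bullet> \<alpha>" by (rule H_inner[OF gi(1)])
          finally show ?thesis using b(2) by simp
        qed
        then have y1: "gi \<beta> $ 1 = 0" by (simp add: inner4)
        obtain h where h: "h \<in> Hinf3" "h e2v = gi \<beta>" using P3desc[OF y1] Sigma_props[OF yS] by blast
        have "gi \<beta> \<in> Sigma3" unfolding Sigma3_def mem_Collect_eq
          using h e2v_D3 by (intro exI[of _ h] exI[of _ e2v]) auto
        moreover have "\<beta> = g (gi \<beta>)" using gi(2) by simp
        ultimately show "\<beta> \<in> g ` Sigma3" by blast
      qed
    next
      show "g ` Sigma3 \<subseteq> {\<beta>\<in>Sigma. \<beta> \<bullet> \<alpha> = 0}"
      proof
        fix z assume "z \<in> g ` Sigma3"
        then obtain y where y: "y \<in> Sigma3" "z = g y" by blast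
        obtain h b where hb: "h \<in> Hinf3" "b \<in> Delta3 \<union> Delta3'" "y = h b" using y(1) unfolding Sigma3_def by blast
        have "z \<in> Sigma" unfolding Sigma_def mem_Collect_eq
          using H_comp[OF g(1) H3_sub[OF hb(1)]] D3_sub hb(2) y(2) hb(3)
          by (intro exI[of _ "g \<circ> h"] exI[of _ b]) auto
        moreover have "z \<bullet> \<alpha> = 0"
        proof -
          have "z \<bullet> \<alpha> = g y \<bullet> g e1v" using y(2) g(2) by simp
          also have "\<dots> = y \<bullet> e1v" by (rule H_inner[OF g(1)])
          also have "\<dots> = 0" using Sigma3_props[OF y(1)] by (simp add: inner4)
          finally show ?thesis .
        qed
        ultimately show "z \<in> {\<beta>\<in>Sigma. \<beta> \<bullet> \<alpha> = 0}" by blast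
      qed
    qed
    then show "\<exists>g\<in>Hinf. {\<beta>\<in>Sigma. \<beta> \<bullet> \<alpha> = 0} = g ` Sigma3" using g(1) by blast
  qed
next
  show "\<forall>\<alpha>\<in>Sigma. \<exists>g\<in>Hinf. \<forall>h\<in>Hinf3. g \<circ> h \<circ> inv g \<in> Hinf \<and> (g \<circ> h \<circ> inv g) \<alpha> = \<alpha>"
  proof
    fix \<alpha> assume a: "\<alpha> \<in> Sigma"
    obtain g where g: "g \<in> Hinf" "g e1v = \<alpha>" using Sigma_Orb[OF a] by blast
    obtain gi where gi: "gi \<in> Hinf" "\<forall>x. gi (g x) = x \<and> g (gi x) = x" using H_inv[OF g(1)] by blast
    have ig: "inv g = gi" by (rule inv_eq[OF gi(2)])
    have "\<forall>h\<in>Hinf3. g \<circ> h \<circ> inv g \<in> Hinf \<and> (g \<circ> h \<circ> inv g) \<alpha> = \<alpha>"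
    proof
      fix h assume h: "h \<in> Hinf3"
      have "g \<circ> h \<circ> inv g \<in> Hinf" unfolding ig by (intro H_comp g(1) H3_sub[OF h] gi(1))
      moreover have "(g \<circ> h \<circ> inv g) \<alpha> = \<alpha>"
        unfolding ig using g(2) gi(2) H3_fix_e1[OF h] by (metis comp_apply)
      ultimately show "g \<circ> h \<circ> inv g \<in> Hinf \<and> (g \<circ> h \<circ> inv g) \<alpha> = \<alpha>" by blast
    qed
    then show "\<exists>g\<in>Hinf. \<forall>h\<in>Hinf3. g \<circ> h \<circ> inv g \<in> Hinf \<and> (g \<circ> h \<circ> inv g) \<alpha> = \<alpha>" using g(1) by blast
  qed
qed

end
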